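(* Consider the risk-averse quantal response mean-field game described in the context, assume the Lipschitz condition on $f_t,r_t$ and that $\nu$ is $m$-strongly convex for some $m>0$. Let $\Phi=\mathcal{B}^{\mathrm{RQE}}_{\mathrm{opt}}\circ\mathcal{B}^{\mathrm{RQE}}_{\mathrm{prop}}:\Pi\to\Pi$ and fix $\beta\in(0,1)$. RQ-Fictitious Play: start from any $\pi^0\in\Pi$ and $\bar\pi^0=0$; for $j=0,1,\dots$ set $\bar\pi^{j+1}$ to be the normalization (for each $t,x$, rescaling to a probability vector) of $\beta\bar\pi^j+(1-\beta)\pi^j$, and $\pi^{j+1}=\Phi(\bar\pi^{j+1})$. Then for all sufficiently large $\alpha$, RQ-Fictitious Play converges to an MF-RQE: $\bar\pi^j$ converges in $d_\Pi$ to a policy $\pi^*$ with $(\pi^*,\mathcal{B}^{\mathrm{RQE}}_{\mathrm{prop}}(\pi^* ))$ an MF-RQE.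
   Context: Let $\mathcal{X},\mathcal{U}$ be finite nonempty sets and $T\ge1$. For finite $E$, $\mathcal{P}(E)$ is the set of probability vectors on $E$ and $d_{TV}(\mu,\mu')=\frac12\|\mu-\mu'\|_1$. For $t\in\{0,\dots,T-1\}$: transition kernels $f_t(x'\mid x,u,\mu)$ (a distribution over $x'$ for each $x,u$ and $\mu\in\mathcal{P}(\mathcal{X})$) and rewards $r_t:\mathcal{X}\times\mathcal{U}\times\mathcal{P}(\mathcal{X})\to[-R_{\max},R_{\max}]$. Lipschitz condition: there are $L_f,L_r>0$ with $\sum_{x'}|f_t(x'\mid x,u,\mu)-f_t(x'\mid x,u,\mu')|\le L_fd_{TV}(\mu,\mu')$ and $|r_t(x,u,\mu)-r_t(x,u,\mu')|\le L_rd_{TV}(\mu,\mu')$. A policy is $\pi=(\pi_0,\dots,\pi_{T-1})$ with $\pi_t(\cdot\mid x)\in\mathcal{P}(\mathcal{U})$; $\Pi_t$ the set of time-$t$ decision rules, $\Pi$ the set of policies, $d_\Pi(\pi,\pi')=\max_{x,t<T}d_{TV}(\pi_t(\cdot\mid x),\pi'_t(\cdot\mid x))$. Given $\pi$ and $\mu_0$, the mean-field flow satisfies $\mu_{t+1}(x')=\sum_x\sum_uf_t(x'\mid x,u,\mu_t)\pi_t(u\mid x)\mu_t(x)$. Q-functions: $Q^\pi_{\mu,T-1}(x,u)=r_{T-1}(x,u,\mu_{T-1})$, $Q^\pi_{\mu,t}(x,u)=r_t(x,u,\mu_t)+\sum_{x'}f_t(x'\mid x,u,\mu_t)V^\pi_{\mu,t+1}(x')$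 for $t<T-1$, $V^\pi_{\mu,t}(x)=\sum_u\pi_t(u\mid x)Q^\pi_{\mu,t}(x,u)$. Data: finite $\mathbb{M}=\{\mu_0^1,\dots,\mu_0^K\}\subset\mathcal{P}(\mathcal{X})$ with probabilities $w_k=\Gamma^*(\mu_0^k)$; $\tau>0$; $\alpha>0$; $\nu:\mathcal{P}(\mathcal{U})\to\mathbb{R}$, $m$-strongly convex meaning $\nu(\lambda p+(1-\lambda)q)\le\lambda\nu(p)+(1-\lambda)\nu(q)-\frac m2\lambda(1-\lambda)\|p-q\|_2^2$. A set of flows $\mathcal{S}=\{\mu^1,\dots,\mu^K\}$ has $\mu^k$ starting at $\mu_0^k$. Cost: $c_t^{\pi,\alpha}(x;\mathcal{S})=\frac1\tau\log\big(\sum_kw_k\exp(-\tau\sum_u\pi_t(u\mid x)Q^\pi_{\mu^k,t}(x,u))\big)+\alpha\nu(\pi_t(\cdot\mid x))$. $(\pi'_t,\pi_{-t})$ is $\pi$ with time-$t$ component replaced by $\pi'_t$. $\mathcal{B}^{\mathrm{RQE}}_{\mathrm{opt}}(\mathcal{S})$ is the (unique) policy $\pi$ with $\pi_t(\cdot\mid x)$ minimizing $c_t^{(\pi'_t,\pi_{-t}),\alpha}(x;\mathcal{S})$ over $\pi'_t\in\Pi_t$ for every $t,x$. $\mathcal{B}^{\mathrm{RQE}}_{\mathrm{prop}}(\pi)$ is the set of flows generated by $\pi$ from each $\mu_0^k$. An MF-RQE is a pair $(\pi^*,\mathcal{S}^* )$ with $\pi^*=\mathcal{B}^{\mathrm{RQE}}_{\mathrm{opt}}(\mathcal{S}^*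 )$ and $\mathcal{B}^{\mathrm{RQE}}_{\mathrm{prop}}(\pi^* )=\mathcal{S}^*$. *)

theory Defs
  imports "HOL-Analysis.Analysis"
begin

definition pdist :: "('a::finite \<Rightarrow> real) \<Rightarrow> bool" where
  "pdist p \<longleftrightarrow> (\<forall>a. 0 \<le> p a) \<and> sum p UNIV = 1"

definition dtv :: "('a::finite \<Rightarrow> real) \<Rightarrow> ('a \<Rightarrow> real) \<Rightarrow> real" where
  "dtv p q = (1/2) * (\<Sum>a\<in>UNIV. \<bar>p a - q a\<bar>)"

text \<open>Policies: pol t x u = pi_t(u|x). Convention: components at times t >= T are 0.\<close>
definition is_policy :: "nat \<Rightarrow> (nat \<Rightarrow> 'x::finite \<Rightarrow> 'u::finite \<Rightarrow> real) \<Rightarrow> bool" where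
  "is_policy T pol \<longleftrightarrow> (\<forall>t<T. \<forall>x. pdist (pol t x)) \<and> (\<forall>t\<ge>T. pol t = (\<lambda>_ _. 0))"

definition dPi :: "nat \<Rightarrow> (nat \<Rightarrow> 'x::finite \<Rightarrow> 'u::finite \<Rightarrow> real)
                   \<Rightarrow> (nat \<Rightarrow> 'x \<Rightarrow> 'u \<Rightarrow> real) \<Rightarrow> real" where
  "dPi T pol pol' = Max ((\<lambda>(t, x). dtv (pol t x) (pol' t x)) ` ({..<T} \<times> UNIV))"

text \<open>Mean-field flow generated by pol from mu0; f t x u mu x' = f_t(x'|x,u,mu).\<close>
fun flow :: "(nat \<Rightarrow> 'x::finite \<Rightarrow> 'u::finite \<Rightarrow> ('x \<Rightarrow> real) \<Rightarrow> 'x \<Rightarrow> real)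
             \<Rightarrow> (nat \<Rightarrow> 'x \<Rightarrow> 'u \<Rightarrow> real) \<Rightarrow> ('x \<Rightarrow> real) \<Rightarrow> nat \<Rightarrow> 'x \<Rightarrow> real" where
  "flow f pol mu0 0 = mu0"
| "flow f pol mu0 (Suc t) =
     (\<lambda>x'. \<Sum>x\<in>UNIV. \<Sum>u\<in>UNIV. f t x u (flow f pol mu0 t) x' * pol t x u * flow f pol mu0 t x)"

text \<open>Q-function by backward recursion; n = number of remaining steps after t.\<close>
fun Qrem :: "(nat \<Rightarrow> 'x::finite \<Rightarrow> 'u::finite \<Rightarrow> ('x \<Rightarrow> real) \<Rightarrow> 'x \<Rightarrow> real)
             \<Rightarrow> (nat \<Rightarrow> 'x \<Rightarrow> 'u \<Rightarrow> ('x \<Rightarrow> real) \<Rightarrow> real)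
             \<Rightarrow> (nat \<Rightarrow> 'x \<Rightarrow> 'u \<Rightarrow> real) \<Rightarrow> (nat \<Rightarrow> 'x \<Rightarrow> real)
             \<Rightarrow> nat \<Rightarrow> nat \<Rightarrow> 'x \<Rightarrow> 'u \<Rightarrow> real" where
  "Qrem f r pol mu 0 t x u = r t x u (mu t)"
| "Qrem f r pol mu (Suc n) t x u = r t x u (mu t) +
     (\<Sum>x'\<in>UNIV. f t x u (mu t) x' *
        (\<Sum>u'\<in>UNIV. pol (Suc t) x' u' * Qrem f r pol mu n (Suc t) x' u'))"

definition Qfun :: "nat \<Rightarrow> (nat \<Rightarrow> 'x::finite \<Rightarrow> 'u::finite \<Rightarrow> ('x \<Rightarrow> real) \<Rightarrow> 'x \<Rightarrow> real)
             \<Rightarrow> (nat \<Rightarrow> 'x \<Rightarrow> 'u \<Rightarrow> ('x \<Rightarrow> real) \<Rightarrow> real)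
             \<Rightarrow> (nat \<Rightarrow> 'x \<Rightarrow> 'u \<Rightarrow> real) \<Rightarrow> (nat \<Rightarrow> 'x \<Rightarrow> real)
             \<Rightarrow> nat \<Rightarrow> 'x \<Rightarrow> 'u \<Rightarrow> real" where
  "Qfun T f r pol mu t = Qrem f r pol mu (T - 1 - t) t"

text \<open>Risk-averse cost c_t^{pol,alpha}(x;S); S k is the k-th flow (k < K), w k its weight.\<close>
definition rq_cost ::
  "nat \<Rightarrow> (nat \<Rightarrow> 'x::finite \<Rightarrow> 'u::finite \<Rightarrow> ('x \<Rightarrow> real) \<Rightarrow> 'x \<Rightarrow> real)
   \<Rightarrow> (nat \<Rightarrow> 'x \<Rightarrow> 'u \<Rightarrow> ('x \<Rightarrow> real) \<Rightarrow> real)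
   \<Rightarrow> nat \<Rightarrow> (nat \<Rightarrow> real) \<Rightarrow> real \<Rightarrow> real \<Rightarrow> (('u \<Rightarrow> real) \<Rightarrow> real)
   \<Rightarrow> (nat \<Rightarrow> 'x \<Rightarrow> 'u \<Rightarrow> real) \<Rightarrow> (nat \<Rightarrow> nat \<Rightarrow> 'x \<Rightarrow> real) \<Rightarrow> nat \<Rightarrow> 'x \<Rightarrow> real" where
  "rq_cost T f r K w tau alpha nu pol S t x =
     (1/tau) * ln (\<Sum>k<K. w k * exp (- tau * (\<Sum>u\<in>UNIV. pol t x u * Qfun T f r pol (S k) t x u)))
     + alpha * nu (pol t x)"

definition is_opt_resp ::
  "nat \<Rightarrow> (nat \<Rightarrow> 'x::finite \<Rightarrow> 'u::finite \<Rightarrow> ('x \<Rightarrow> real) \<Rightarrow> 'x \<Rightarrow> real)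
   \<Rightarrow> (nat \<Rightarrow> 'x \<Rightarrow> 'u \<Rightarrow> ('x \<Rightarrow> real) \<Rightarrow> real)
   \<Rightarrow> nat \<Rightarrow> (nat \<Rightarrow> real) \<Rightarrow> real \<Rightarrow> real \<Rightarrow> (('u \<Rightarrow> real) \<Rightarrow> real)
   \<Rightarrow> (nat \<Rightarrow> nat \<Rightarrow> 'x \<Rightarrow> real) \<Rightarrow> (nat \<Rightarrow> 'x \<Rightarrow> 'u \<Rightarrow> real) \<Rightarrow> bool" where
  "is_opt_resp T f r K w tau alpha nu S pol \<longleftrightarrow> is_policy T pol \<and>
     (\<forall>t<T. \<forall>x. \<forall>p. (\<forall>y. pdist (p y)) \<longrightarrow>
        rq_cost T f r K w tau alpha nu pol S t x \<le> rq_cost T f r K w tau alpha nu (pol(t := p)) S t x)"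

definition B_opt ::
  "nat \<Rightarrow> (nat \<Rightarrow> 'x::finite \<Rightarrow> 'u::finite \<Rightarrow> ('x \<Rightarrow> real) \<Rightarrow> 'x \<Rightarrow> real)
   \<Rightarrow> (nat \<Rightarrow> 'x \<Rightarrow> 'u \<Rightarrow> ('x \<Rightarrow> real) \<Rightarrow> real)
   \<Rightarrow> nat \<Rightarrow> (nat \<Rightarrow> real) \<Rightarrow> real \<Rightarrow> real \<Rightarrow> (('u \<Rightarrow> real) \<Rightarrow> real)
   \<Rightarrow> (nat \<Rightarrow> nat \<Rightarrow> 'x \<Rightarrow> real) \<Rightarrow> (nat \<Rightarrow> 'x \<Rightarrow> 'u \<Rightarrow> real)" where
  "B_opt T f r K w tau alpha nu S = (THE pol. is_opt_resp T f r K w tau alpha nu S pol)"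

definition B_prop ::
  "(nat \<Rightarrow> 'x::finite \<Rightarrow> 'u::finite \<Rightarrow> ('x \<Rightarrow> real) \<Rightarrow> 'x \<Rightarrow> real)
   \<Rightarrow> nat \<Rightarrow> (nat \<Rightarrow> 'x \<Rightarrow> real) \<Rightarrow> (nat \<Rightarrow> 'x \<Rightarrow> 'u \<Rightarrow> real) \<Rightarrow> (nat \<Rightarrow> nat \<Rightarrow> 'x \<Rightarrow> real)" where
  "B_prop f K mu0 pol = (\<lambda>k. if k < K then flow f pol (mu0 k) else (\<lambda>_ _. 0))"

definition is_MF_RQE ::
  "nat \<Rightarrow> (nat \<Rightarrow> 'x::finite \<Rightarrow> 'u::finite \<Rightarrow> ('x \<Rightarrow> real) \<Rightarrow> 'x \<Rightarrow> real)
   \<Rightarrow> (nat \<Rightarrow> 'x \<Rightarrow> 'u \<Rightarrow> ('x \<Rightarrow> real) \<Rightarrow> real)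
   \<Rightarrow> nat \<Rightarrow> (nat \<Rightarrow> 'x \<Rightarrow> real) \<Rightarrow> (nat \<Rightarrow> real) \<Rightarrow> real \<Rightarrow> real \<Rightarrow> (('u \<Rightarrow> real) \<Rightarrow> real)
   \<Rightarrow> (nat \<Rightarrow> 'x \<Rightarrow> 'u \<Rightarrow> real) \<Rightarrow> (nat \<Rightarrow> nat \<Rightarrow> 'x \<Rightarrow> real) \<Rightarrow> bool" where
  "is_MF_RQE T f r K mu0 w tau alpha nu pol S \<longleftrightarrow>
     pol = B_opt T f r K w tau alpha nu S \<and> B_prop f K mu0 pol = S"

definition normalize_pol :: "(nat \<Rightarrow> 'x \<Rightarrow> 'u::finite \<Rightarrow> real) \<Rightarrow> (nat \<Rightarrow> 'x \<Rightarrow> 'u \<Rightarrow> real)" where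
  "normalize_pol pol = (\<lambda>t x u. pol t x u / (\<Sum>u'\<in>UNIV. pol t x u'))"

fun rqfp :: "((nat \<Rightarrow> 'x \<Rightarrow> 'u::finite \<Rightarrow> real) \<Rightarrow> (nat \<Rightarrow> 'x \<Rightarrow> 'u \<Rightarrow> real)) \<Rightarrow> real
             \<Rightarrow> (nat \<Rightarrow> 'x \<Rightarrow> 'u \<Rightarrow> real) \<Rightarrow> nat
             \<Rightarrow> (nat \<Rightarrow> 'x \<Rightarrow> 'u \<Rightarrow> real) \<times> (nat \<Rightarrow> 'x \<Rightarrow> 'u \<Rightarrow> real)" where
  "rqfp Phi beta pi0 0 = ((\<lambda>_ _ _. 0), pi0)"
| "rqfp Phi beta pi0 (Suc j) =
     (let pb = normalize_pol (\<lambda>t x u. beta * fst (rqfp Phi beta pi0 j) t x u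
                                     + (1 - beta) * snd (rqfp Phi beta pi0 j) t x u)
      in (pb, Phi pb))"

definition strongly_convex_simplex :: "real \<Rightarrow> (('u::finite \<Rightarrow> real) \<Rightarrow> real) \<Rightarrow> bool" where
  "strongly_convex_simplex m nu \<longleftrightarrow>
     (\<forall>p q l. pdist p \<longrightarrow> pdist q \<longrightarrow> 0 \<le> l \<longrightarrow> l \<le> 1 \<longrightarrow>
        nu (\<lambda>u. l * p u + (1 - l) * q u)
          \<le> l * nu p + (1 - l) * nu q - m / 2 * l * (1 - l) * (\<Sum>u\<in>UNIV. (p u - q u)^2))"

end

theory Submission
  imports Defs
begin


lemma pdist_nonneg: "pdist p \<Longrightarrow> 0 \<le> p u" by (simp add: pdist_def)
lemma pdist_sum: "pdist p \<Longrightarrow> sum p UNIV = 1" by (simp add: pdist_def)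
lemma pdist_le1: "pdist (p::'a::finite\<Rightarrow>real) \<Longrightarrow> p u \<le> 1"
  using member_le_sum[of u UNIV p] by (auto simp: pdist_def)

lemma pdist_mix:
  assumes "pdist (p::'a::finite\<Rightarrow>real)" "pdist q" "0 \<le> l" "l \<le> 1"
  shows "pdist (\<lambda>u. l * p u + (1 - l) * q u)"
  using assms by (auto simp: pdist_def sum.distrib sum_distrib_left[symmetric])

lemma dtv_nonneg: "0 \<le> dtv p q" by (simp add: dtv_def sum_nonneg)
lemma dtv_sym: "dtv p q = dtv q p" by (simp add: dtv_def abs_minus_commute)
lemma dtv_triangle: "dtv p r \<le> dtv p q + dtv q r"
proof -
  have "(\<Sum>a\<in>UNIV. \<bar>p a - r a\<bar>) \<le> (\<Sum>a\<in>UNIV. \<bar>p a - q a\<bar> + \<bar>q a - r a\<bar>)"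
    by (intro sum_mono) linarith
  then show ?thesis by (simp add: dtv_def sum.distrib)
qed
lemma abs_le_dtv: "\<bar>p u - q u\<bar> \<le> 2 * dtv p q"
  using member_le_sum[of u UNIV "\<lambda>a. \<bar>p a - q a\<bar>"] by (simp add: dtv_def)
lemma dtv_le1: assumes "pdist p" "pdist q" shows "dtv p q \<le> 1"
proof -
  have "(\<Sum>a\<in>UNIV. \<bar>p a - q a\<bar>) \<le> (\<Sum>a\<in>UNIV. p a + q a)"
    using assms by (intro sum_mono) (auto simp: pdist_def abs_le_iff intro: add_increasing add_increasing2)
  then show ?thesis using assms by (simp add: dtv_def sum.distrib pdist_def)
qed
lemma dtv_zero: assumes "dtv p q \<le> 0" shows "p = q"
proof
  fix u show "p u = q u" using abs_le_dtv[of p u q] assms dtv_nonneg[of p q] by linarith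
qed
lemma dtv_mix:
  assumes "0 \<le> l" "l \<le> 1"
  shows "dtv (\<lambda>u. l * a u + (1 - l) * b u) (\<lambda>u. l * a' u + (1 - l) * b' u) \<le> l * dtv a a' + (1 - l) * dtv b b'"
proof -
  have "(\<Sum>u\<in>UNIV. \<bar>(l * a u + (1 - l) * b u) - (l * a' u + (1 - l) * b' u)\<bar>)
      \<le> (\<Sum>u\<in>UNIV. l * \<bar>a u - a' u\<bar> + (1 - l) * \<bar>b u - b' u\<bar>)"
  proof (intro sum_mono)
    fix u
    have "\<bar>(l * a u + (1 - l) * b u) - (l * a' u + (1 - l) * b' u)\<bar> = \<bar>l * (a u - a' u) + (1 - l) * (b u - b' u)\<bar>"
      by (simp add: algebra_simps)
    also have "\<dots> \<le> \<bar>l * (a u - a' u)\<bar> + \<bar>(1 - l) * (b u - b' u)\<bar>" by (rule abs_triangle_ineq)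
    also have "\<dots> = l * \<bar>a u - a' u\<bar> + (1 - l) * \<bar>b u - b' u\<bar>" using assms by (simp add: abs_mult)
    finally show "\<bar>(l * a u + (1 - l) * b u) - (l * a' u + (1 - l) * b' u)\<bar> \<le> l * \<bar>a u - a' u\<bar> + (1 - l) * \<bar>b u - b' u\<bar>" .
  qed
  also have "\<dots> = l * (\<Sum>u\<in>UNIV. \<bar>a u - a' u\<bar>) + (1 - l) * (\<Sum>u\<in>UNIV. \<bar>b u - b' u\<bar>)"
    by (simp add: sum.distrib sum_distrib_left)
  finally have S: "(\<Sum>u\<in>UNIV. \<bar>(l * a u + (1 - l) * b u) - (l * a' u + (1 - l) * b' u)\<bar>)
     \<le> l * (\<Sum>u\<in>UNIV. \<bar>a u - a' u\<bar>) + (1 - l) * (\<Sum>u\<in>UNIV. \<bar>b u - b' u\<bar>)" .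
  have e: "l * dtv a a' + (1 - l) * dtv b b' = 1/2 * (l * (\<Sum>u\<in>UNIV. \<bar>a u - a' u\<bar>) + (1 - l) * (\<Sum>u\<in>UNIV. \<bar>b u - b' u\<bar>))"
    by (simp add: dtv_def field_simps)
  show ?thesis unfolding e using S by (simp add: dtv_def)
qed

lemma lin_bound:
  assumes "pdist (p::'a::finite\<Rightarrow>real)" "\<And>u. \<bar>Q u\<bar> \<le> M"
  shows "\<bar>\<Sum>u\<in>UNIV. p u * Q u\<bar> \<le> M"
proof -
  have "\<bar>\<Sum>u\<in>UNIV. p u * Q u\<bar> \<le> (\<Sum>u\<in>UNIV. \<bar>p u * Q u\<bar>)" by (rule sum_abs)
  also have "\<dots> \<le> (\<Sum>u\<in>UNIV. p u * M)"
    using assms by (intro sum_mono) (simp add: abs_mult pdist_def mult_left_mono)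
  also have "\<dots> = M" using assms by (simp add: sum_distrib_right[symmetric] pdist_def)
  finally show ?thesis .
qed

lemma lin_diff:
  fixes p q Q :: "'a::finite \<Rightarrow> real"
  assumes "\<And>u. \<bar>Q u\<bar> \<le> M"
  shows "\<bar>(\<Sum>u\<in>UNIV. p u * Q u) - (\<Sum>u\<in>UNIV. q u * Q u)\<bar> \<le> M * (\<Sum>u\<in>UNIV. \<bar>p u - q u\<bar>)"
proof -
  have "(\<Sum>u\<in>UNIV. p u * Q u) - (\<Sum>u\<in>UNIV. q u * Q u) = (\<Sum>u\<in>UNIV. (p u - q u) * Q u)"
    by (simp add: sum_subtractf left_diff_distrib)
  then have "\<bar>(\<Sum>u\<in>UNIV. p u * Q u) - (\<Sum>u\<in>UNIV. q u * Q u)\<bar> = \<bar>\<Sum>u\<in>UNIV. (p u - q u) * Q u\<bar>"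
    by simp
  also have "\<dots> \<le> (\<Sum>u\<in>UNIV. \<bar>(p u - q u) * Q u\<bar>)" by (rule sum_abs)
  also have "\<dots> \<le> (\<Sum>u\<in>UNIV. \<bar>p u - q u\<bar> * M)"
    using assms by (intro sum_mono) (simp add: abs_mult mult_left_mono)
  also have "\<dots> = M * (\<Sum>u\<in>UNIV. \<bar>p u - q u\<bar>)" by (simp add: sum_distrib_left mult.commute)
  finally show ?thesis .
qed

lemma lin_diff2:
  assumes "pdist (p::'a::finite\<Rightarrow>real)" "\<And>u. \<bar>Q u - Q' u\<bar> \<le> D"
  shows "\<bar>(\<Sum>u\<in>UNIV. p u * Q u) - (\<Sum>u\<in>UNIV. p u * Q' u)\<bar> \<le> D"
proof -
  have "(\<Sum>u\<in>UNIV. p u * Q u) - (\<Sum>u\<in>UNIV. p u * Q' u) = (\<Sum>u\<in>UNIV. p u * (Q u - Q' u))"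
    by (simp add: sum_subtractf right_diff_distrib)
  then show ?thesis using lin_bound[OF assms] by simp
qed

lemma exp_diff_bound:
  fixes a b R :: real
  assumes "\<bar>a\<bar> \<le> R" "\<bar>b\<bar> \<le> R"
  shows "\<bar>exp a - exp b\<bar> \<le> exp R * \<bar>a - b\<bar>"
proof -
  have h: "exp x - exp y \<le> exp R * \<bar>x - y\<bar>" if "\<bar>x\<bar> \<le> R" "\<bar>y\<bar> \<le> R" for x y :: real
  proof -
    have "exp y = exp x * exp (y - x)" by (simp add: exp_diff)
    also have "\<dots> \<ge> exp x * (1 + (y - x))" using exp_ge_add_one_self[of "y - x"] by (simp add: mult_left_mono)
    finally have "exp x - exp y \<le> exp x * (x - y)" by (simp add: algebra_simps)
    also have "\<dots> \<le> exp x * \<bar>x - y\<bar>" by (simp add: mult_left_mono)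
    also have "\<dots> \<le> exp R * \<bar>x - y\<bar>" using that by (intro mult_right_mono) auto
    finally show ?thesis .
  qed
  show ?thesis using h[OF assms] h[OF assms(2,1)] by (auto simp: abs_le_iff abs_minus_commute)
qed

lemma wsum_pos:
  fixes K :: nat and w z :: "nat \<Rightarrow> real"
  assumes "\<And>k. k < K \<Longrightarrow> 0 \<le> w k" "(\<Sum>k<K. w k) = (1::real)"
  shows "0 < (\<Sum>k<K. w k * exp (z k))"
proof -
  obtain k where k: "k < K" "w k > 0"
  proof (rule ccontr)
    assume "\<not> thesis"
    then have "\<forall>k<K. w k \<le> 0" using that by force
    then have "(\<Sum>k<K. w k) \<le> 0" by (intro sum_nonpos) auto
    then show False using assms by simp
  qed
  have "w k * exp (z k) \<le> (\<Sum>k<K. w k * exp (z k))"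
    by (rule member_le_sum) (use k assms in auto)
  moreover have "0 < w k * exp (z k)" using k by simp
  ultimately show ?thesis by linarith
qed



definition gcost :: "real \<Rightarrow> nat \<Rightarrow> (nat \<Rightarrow> real) \<Rightarrow> (nat \<Rightarrow> 'u::finite \<Rightarrow> real) \<Rightarrow> ('u \<Rightarrow> real) \<Rightarrow> real" where
  "gcost tau K w Q q = (1/tau) * ln (\<Sum>k<K. w k * exp (- tau * (\<Sum>u\<in>UNIV. q u * Q k u)))"

lemma sqrt_exp: "sqrt (exp x) = exp (x / 2)"
proof (rule real_sqrt_unique)
  show "(exp (x / 2))\<^sup>2 = exp x" by (simp add: power2_eq_square exp_add[symmetric])
qed simp

lemma gcost_mid:
  fixes w :: "nat \<Rightarrow> real"
  assumes tau: "tau > 0" and w: "\<And>k. k < K \<Longrightarrow> 0 \<le> w k" "(\<Sum>k<K. w k) = 1"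
  shows "gcost tau K w Q (\<lambda>u. 1/2 * p u + (1 - 1/2) * q u) \<le> 1/2 * gcost tau K w Q p + (1 - 1/2) * gcost tau K w Q q"
proof -
  define A where "A k = exp (- tau * (\<Sum>u\<in>UNIV. p u * Q k u))" for k
  define B where "B k = exp (- tau * (\<Sum>u\<in>UNIV. q u * Q k u))" for k
  have mid: "exp (- tau * (\<Sum>u\<in>UNIV. (1/2 * p u + (1 - 1/2) * q u) * Q k u)) = sqrt (A k) * sqrt (B k)" for k
  proof -
    have "(\<Sum>u\<in>UNIV. (1/2 * p u + (1 - 1/2) * q u) * Q k u) = 1/2 * (\<Sum>u\<in>UNIV. p u * Q k u) + 1/2 * (\<Sum>u\<in>UNIV. q u * Q k u)"
      by (simp add: sum.distrib sum_distrib_left algebra_simps)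
    then have "exp (- tau * (\<Sum>u\<in>UNIV. (1/2 * p u + (1 - 1/2) * q u) * Q k u))
        = exp ((- tau * (\<Sum>u\<in>UNIV. p u * Q k u)) / 2) * exp ((- tau * (\<Sum>u\<in>UNIV. q u * Q k u)) / 2)"
      by (simp add: exp_add[symmetric] algebra_simps)
    also have "\<dots> = sqrt (A k) * sqrt (B k)"
      by (simp add: A_def B_def sqrt_exp)
    finally show ?thesis .
  qed
  have SA: "0 < (\<Sum>k<K. w k * A k)" unfolding A_def by (rule wsum_pos[OF w])
  have SB: "0 < (\<Sum>k<K. w k * B k)" unfolding B_def by (rule wsum_pos[OF w])
  have SM: "0 < (\<Sum>k<K. w k * (sqrt (A k) * sqrt (B k)))"
    using wsum_pos[OF w, of "\<lambda>k. - tau * (\<Sum>u\<in>UNIV. (1/2 * p u + (1 - 1/2) * q u) * Q k u)"] by (simp only: mid)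
  have CS: "(\<Sum>k<K. sqrt (w k * A k) * sqrt (w k * B k))\<^sup>2 \<le> (\<Sum>k<K. (sqrt (w k * A k))\<^sup>2) * (\<Sum>k<K. (sqrt (w k * B k))\<^sup>2)"
    by (rule Cauchy_Schwarz_ineq_sum)
  have e1: "(\<Sum>k<K. sqrt (w k * A k) * sqrt (w k * B k)) = (\<Sum>k<K. w k * (sqrt (A k) * sqrt (B k)))"
    using w(1) by (intro sum.cong refl) (simp add: real_sqrt_mult A_def B_def)
  have e2: "(\<Sum>k<K. (sqrt (w k * A k))\<^sup>2) = (\<Sum>k<K. w k * A k)"
    using w(1) by (intro sum.cong refl) (simp add: A_def)
  have e3: "(\<Sum>k<K. (sqrt (w k * B k))\<^sup>2) = (\<Sum>k<K. w k * B k)"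
    using w(1) by (intro sum.cong refl) (simp add: B_def)
  have CS2: "(\<Sum>k<K. w k * (sqrt (A k) * sqrt (B k)))\<^sup>2 \<le> (\<Sum>k<K. w k * A k) * (\<Sum>k<K. w k * B k)"
    using CS e1 e2 e3 by simp
  have "ln ((\<Sum>k<K. w k * (sqrt (A k) * sqrt (B k)))\<^sup>2) \<le> ln ((\<Sum>k<K. w k * A k) * (\<Sum>k<K. w k * B k))"
    using CS2 SM SA SB by (subst ln_le_cancel_iff) auto
  then have "2 * ln (\<Sum>k<K. w k * (sqrt (A k) * sqrt (B k))) \<le> ln (\<Sum>k<K. w k * A k) + ln (\<Sum>k<K. w k * B k)"
    using SM SA SB by (simp add: ln_mult ln_realpow)
  then have "(1/tau) * ln (\<Sum>k<K. w k * (sqrt (A k) * sqrt (B k))) \<le> 1/2 * ((1/tau) * ln (\<Sum>k<K. w k * A k)) + (1 - 1/2) * ((1/tau) * ln (\<Sum>k<K. w k * B k))"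
    using tau by (simp add: field_simps)
  moreover have "gcost tau K w Q (\<lambda>u. 1/2 * p u + (1 - 1/2) * q u) = (1/tau) * ln (\<Sum>k<K. w k * (sqrt (A k) * sqrt (B k)))"
    unfolding gcost_def mid ..
  moreover have "gcost tau K w Q p = (1/tau) * ln (\<Sum>k<K. w k * A k)" unfolding gcost_def A_def ..
  moreover have "gcost tau K w Q q = (1/tau) * ln (\<Sum>k<K. w k * B k)" unfolding gcost_def B_def ..
  ultimately show ?thesis by simp
qed

lemma argmin_stab:
  fixes nu :: "('u::finite \<Rightarrow> real) \<Rightarrow> real"
  assumes sc: "strongly_convex_simplex m nu" and alpha: "alpha \<ge> 0"
    and g1: "\<And>p q. pdist p \<Longrightarrow> pdist q \<Longrightarrow> g1 (\<lambda>u. 1/2 * p u + (1 - 1/2) * q u) \<le> 1/2 * g1 p + (1 - 1/2) * g1 q"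
    and g2: "\<And>p q. pdist p \<Longrightarrow> pdist q \<Longrightarrow> g2 (\<lambda>u. 1/2 * p u + (1 - 1/2) * q u) \<le> 1/2 * g2 p + (1 - 1/2) * g2 q"
    and p1: "pdist p1" and min1: "\<And>q. pdist q \<Longrightarrow> g1 p1 + alpha * nu p1 \<le> g1 q + alpha * nu q"
    and p2: "pdist p2" and min2: "\<And>q. pdist q \<Longrightarrow> g2 p2 + alpha * nu p2 \<le> g2 q + alpha * nu q"
  shows "alpha * m / 2 * (\<Sum>u\<in>UNIV. (p1 u - p2 u)^2) \<le> g1 p2 - g1 p1 + g2 p1 - g2 p2"
proof -
  define S where "S = (\<Sum>u\<in>UNIV. (p1 u - p2 u)^2)"
  have S': "(\<Sum>u\<in>UNIV. (p2 u - p1 u)^2) = S" unfolding S_def by (simp add: power2_commute)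
  have one: "alpha * m / 4 * S \<le> (g1 b + alpha * nu b) - (g1 a + alpha * nu a)"
    if ga: "\<And>p q. pdist p \<Longrightarrow> pdist q \<Longrightarrow> g1 (\<lambda>u. 1/2 * p u + (1 - 1/2) * q u) \<le> 1/2 * g1 p + (1 - 1/2) * g1 q"
     and a: "pdist a" and b: "pdist b" and mn: "\<And>q. pdist q \<Longrightarrow> g1 a + alpha * nu a \<le> g1 q + alpha * nu q"
     and SS: "(\<Sum>u\<in>UNIV. (a u - b u)^2) = S"
    for g1 a b
  proof -
    let ?c = "\<lambda>u. 1/2 * a u + (1 - 1/2) * b u"
    have pc: "pdist ?c" by (rule pdist_mix[OF a b]) auto
    have nuc: "nu ?c \<le> 1/2 * nu a + (1 - 1/2) * nu b - m / 2 * (1/2) * (1 - 1/2) * S"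
      using sc[unfolded strongly_convex_simplex_def, rule_format, of a b "1/2"] a b SS by simp
    have "g1 a + alpha * nu a \<le> g1 ?c + alpha * nu ?c" by (rule mn[OF pc])
    also have "\<dots> \<le> (1/2 * g1 a + (1 - 1/2) * g1 b) + alpha * (1/2 * nu a + (1 - 1/2) * nu b - m / 2 * (1/2) * (1 - 1/2) * S)"
      using ga[OF a b] nuc alpha by (intro add_mono mult_left_mono) auto
    finally show ?thesis by (simp add: algebra_simps)
  qed
  have h1: "alpha * m / 4 * S \<le> (g1 p2 + alpha * nu p2) - (g1 p1 + alpha * nu p1)"
    by (rule one[OF g1 p1 p2 min1]) (auto simp: S_def)
  have h2: "alpha * m / 4 * S \<le> (g2 p1 + alpha * nu p1) - (g2 p2 + alpha * nu p2)"
    by (rule one[OF g2 p2 p1 min2]) (use S' in auto)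
  show ?thesis using h1 h2 unfolding S_def[symmetric] by (simp add: algebra_simps)
qed



lemma softmax_diff:
  fixes K :: nat and w z y :: "nat \<Rightarrow> real"
  assumes w: "\<And>k. k < K \<Longrightarrow> 0 \<le> w k" "(\<Sum>k<K. w k) = 1"
    and eps: "0 \<le> eps" "\<And>k. k < K \<Longrightarrow> \<bar>z k - y k\<bar> \<le> eps"
  shows "(\<Sum>k<K. \<bar>w k * exp (z k) / (\<Sum>j<K. w j * exp (z j)) - w k * exp (y k) / (\<Sum>j<K. w j * exp (y j))\<bar>) \<le> exp (2 * eps) - 1"
proof -
  define Z where "Z = (\<Sum>j<K. w j * exp (z j))"
  define Y where "Y = (\<Sum>j<K. w j * exp (y j))"
  have Zp: "Z > 0" unfolding Z_def by (rule wsum_pos[OF w])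
  have Yp: "Y > 0" unfolding Y_def by (rule wsum_pos[OF w])
  have "Z \<le> (\<Sum>j<K. w j * (exp eps * exp (y j)))" unfolding Z_def
  proof (intro sum_mono mult_left_mono)
    fix j assume "j \<in> {..<K}"
    then have "z j \<le> eps + y j" using eps(2)[of j] by auto
    then show "exp (z j) \<le> exp eps * exp (y j)" by (simp add: exp_add[symmetric])
    show "0 \<le> w j" using w(1) \<open>j \<in> {..<K}\<close> by auto
  qed
  also have "\<dots> = exp eps * Y" unfolding Y_def sum_distrib_left by (intro sum.cong refl) (simp add: mult_ac)
  finally have Zu: "Z \<le> exp eps * Y" .
  have "exp (- eps) * Y = (\<Sum>j<K. w j * (exp (- eps) * exp (y j)))" unfolding Y_def sum_distrib_left by (intro sum.cong refl) (simp add: mult_ac)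
  also have "\<dots> \<le> Z" unfolding Z_def
  proof (intro sum_mono mult_left_mono)
    fix j assume "j \<in> {..<K}"
    then have "- eps + y j \<le> z j" using eps(2)[of j] by auto
    then show "exp (- eps) * exp (y j) \<le> exp (z j)" by (simp add: exp_add[symmetric])
    show "0 \<le> w j" using w(1) \<open>j \<in> {..<K}\<close> by auto
  qed
  finally have Zl: "exp (- eps) * Y \<le> Z" .
  have "\<bar>w k * exp (z k) / Z - w k * exp (y k) / Y\<bar> \<le> (w k * exp (y k) / Y) * (exp (2 * eps) - 1)" if k: "k < K" for k
  proof -
    define rho where "rho = exp (z k - y k) * Y / Z"
    have ez: "exp (y k) * exp (z k - y k) = exp (z k)" by (simp add: exp_diff)
    have "(w k * exp (y k) / Y) * rho = w k * (exp (y k) * exp (z k - y k)) / Z"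
      unfolding rho_def using Zp Yp by simp
    then have "(w k * exp (y k) / Y) * rho = w k * exp (z k) / Z" unfolding ez .
    then have eq: "w k * exp (z k) / Z - w k * exp (y k) / Y = (w k * exp (y k) / Y) * (rho - 1)"
      by (simp add: right_diff_distrib)
    have r1: "exp (z k - y k) \<le> exp eps" using eps(2)[OF k] by auto
    have r2: "exp (- eps) \<le> exp (z k - y k)" using eps(2)[OF k] by auto
    have YZ1: "Y / Z \<le> exp eps"
    proof -
      have "Y = exp eps * (exp (- eps) * Y)" by (simp add: exp_minus)
      also have "\<dots> \<le> exp eps * Z" using Zl by simp
      finally show ?thesis using Zp by (simp add: divide_le_eq)
    qed
    have YZ2: "exp (- eps) \<le> Y / Z"
    proof -
      have "exp (- eps) * Z \<le> exp (- eps) * (exp eps * Y)" using Zu by simp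
      also have "\<dots> = Y" by (simp add: exp_minus)
      finally show ?thesis using Zp by (simp add: le_divide_eq)
    qed
    have "rho \<le> exp eps * exp eps" unfolding rho_def
      using mult_mono[OF r1 YZ1] Zp Yp by (simp add: mult.assoc)
    moreover have "exp (2 * eps) = exp eps * exp eps" by (simp add: exp_add[symmetric])
    ultimately have rho_u: "rho \<le> exp (2 * eps)" by simp
    have "exp (- eps) * exp (- eps) \<le> rho" unfolding rho_def
      using mult_mono[OF r2 YZ2] Zp Yp by (simp add: mult.assoc)
    moreover have "exp (- (2 * eps)) = exp (- eps) * exp (- eps)" by (simp add: exp_add[symmetric])
    ultimately have rho_l: "exp (- (2 * eps)) \<le> rho" by simp
    have am: "1 - exp (- (2 * eps)) \<le> exp (2 * eps) - 1"
      using exp_ge_add_one_self[of "2 * eps"] exp_ge_add_one_self[of "- (2 * eps)"] by linarith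
    have r: "\<bar>rho - 1\<bar> \<le> exp (2 * eps) - 1" using rho_u rho_l am by linarith
    have c0: "0 \<le> w k * exp (y k) / Y" using w(1)[OF k] Yp by simp
    show ?thesis unfolding eq abs_mult abs_of_nonneg[OF c0] by (rule mult_left_mono[OF r c0])
  qed
  then have "(\<Sum>k<K. \<bar>w k * exp (z k) / Z - w k * exp (y k) / Y\<bar>) \<le> (\<Sum>k<K. (w k * exp (y k) / Y) * (exp (2 * eps) - 1))"
    by (intro sum_mono) auto
  also have "\<dots> = (\<Sum>k<K. w k * exp (y k)) / Y * (exp (2 * eps) - 1)"
    by (simp only: sum_distrib_right[symmetric] sum_divide_distrib[symmetric])
  also have "\<dots> = exp (2 * eps) - 1" using Yp by (simp add: Y_def)
  finally show ?thesis unfolding Z_def Y_def .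
qed

lemma lse_mixed:
  fixes K :: nat and w z1 z2 y1 y2 :: "nat \<Rightarrow> real"
  assumes w: "\<And>k. k < K \<Longrightarrow> 0 \<le> w k" "(\<Sum>k<K. w k) = 1"
    and R: "\<And>k. k < K \<Longrightarrow> \<bar>z2 k - z1 k\<bar> \<le> R" "\<And>k. k < K \<Longrightarrow> \<bar>y2 k - y1 k\<bar> \<le> R"
    and R': "\<And>k. k < K \<Longrightarrow> \<bar>y2 k - y1 k\<bar> \<le> R'"
    and rho: "\<And>k. k < K \<Longrightarrow> \<bar>(z2 k - z1 k) - (y2 k - y1 k)\<bar> \<le> rho"
    and eps: "0 \<le> eps" "\<And>k. k < K \<Longrightarrow> \<bar>z1 k - y1 k\<bar> \<le> eps"
  shows "ln (\<Sum>k<K. w k * exp (z2 k)) - ln (\<Sum>k<K. w k * exp (z1 k))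
          - (ln (\<Sum>k<K. w k * exp (y2 k)) - ln (\<Sum>k<K. w k * exp (y1 k)))
         \<le> exp (2 * R) * (rho + (exp (2 * eps) - 1) * R')"
proof -
  define Z1 where "Z1 = (\<Sum>k<K. w k * exp (z1 k))"
  define Z2 where "Z2 = (\<Sum>k<K. w k * exp (z2 k))"
  define Y1 where "Y1 = (\<Sum>k<K. w k * exp (y1 k))"
  define Y2 where "Y2 = (\<Sum>k<K. w k * exp (y2 k))"
  have pos: "Z1 > 0" "Z2 > 0" "Y1 > 0" "Y2 > 0" unfolding Z1_def Z2_def Y1_def Y2_def
    using wsum_pos[OF w] by auto
  define s where "s k = w k * exp (z1 k) / Z1" for k
  define t where "t k = w k * exp (y1 k) / Y1" for k
  define al where "al k = z2 k - z1 k" for k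
  define be where "be k = y2 k - y1 k" for k
  have s_nn: "0 \<le> s k" if "k < K" for k using w(1)[OF that] pos by (simp add: s_def)
  have t_nn: "0 \<le> t k" if "k < K" for k using w(1)[OF that] pos by (simp add: t_def)
  have s1: "(\<Sum>k<K. s k) = 1" unfolding s_def using pos by (simp add: sum_divide_distrib[symmetric] Z1_def)
  have t1: "(\<Sum>k<K. t k) = 1" unfolding t_def using pos by (simp add: sum_divide_distrib[symmetric] Y1_def)
  have A: "Z2 / Z1 = (\<Sum>k<K. s k * exp (al k))"
  proof -
    have "s k * exp (al k) = w k * exp (z2 k) / Z1" for k
      unfolding s_def al_def by (simp add: exp_diff)
    then show ?thesis unfolding Z2_def by (simp add: sum_divide_distrib)
  qed
  have B: "Y2 / Y1 = (\<Sum>k<K. t k * exp (be k))"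
  proof -
    have "t k * exp (be k) = w k * exp (y2 k) / Y1" for k
      unfolding t_def be_def by (simp add: exp_diff)
    then show ?thesis unfolding Y2_def by (simp add: sum_divide_distrib)
  qed
  have R0: "0 \<le> R" 
  proof -
    obtain k where "k < K" using w(2) by (cases K) auto
    then show ?thesis using R(1)[of k] by linarith
  qed
  have Bl: "exp (- R) \<le> Y2 / Y1"
  proof -
    have e0: "exp (- R) = (\<Sum>k<K. t k * exp (- R))" using t1 by (simp add: sum_distrib_right[symmetric])
    have beR: "- R \<le> be k" if "k < K" for k using R(2)[OF that] unfolding be_def by linarith
    have "(\<Sum>k<K. t k * exp (- R)) \<le> (\<Sum>k<K. t k * exp (be k))"
      using t_nn beR by (intro sum_mono mult_left_mono) auto
    then show ?thesis using B e0 by simp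
  qed
  have ABeq: "Z2 / Z1 - Y2 / Y1 = (\<Sum>k<K. s k * (exp (al k) - exp (be k))) + (\<Sum>k<K. (s k - t k) * (exp (be k) - 1))"
  proof -
    have "(\<Sum>k<K. s k * (exp (al k) - exp (be k))) + (\<Sum>k<K. (s k - t k) * (exp (be k) - 1))
        = (\<Sum>k<K. s k * (exp (al k) - exp (be k)) + (s k - t k) * (exp (be k) - 1))"
      by (rule sum.distrib[symmetric])
    also have "\<dots> = (\<Sum>k<K. (s k * exp (al k) - t k * exp (be k)) - (s k - t k))"
      by (intro sum.cong refl) (simp add: algebra_simps)
    also have "\<dots> = (\<Sum>k<K. s k * exp (al k)) - (\<Sum>k<K. t k * exp (be k)) - ((\<Sum>k<K. s k) - (\<Sum>k<K. t k))"
      by (simp add: sum_subtractf)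
    finally show ?thesis unfolding A B s1 t1 by simp
  qed
  have "\<bar>Z2 / Z1 - Y2 / Y1\<bar> \<le> (\<Sum>k<K. s k * (exp R * rho)) + (\<Sum>k<K. \<bar>s k - t k\<bar> * (exp R * R'))"
  proof -
    have "\<bar>\<Sum>k<K. s k * (exp (al k) - exp (be k))\<bar> \<le> (\<Sum>k<K. s k * (exp R * rho))"
    proof -
      have "\<bar>\<Sum>k<K. s k * (exp (al k) - exp (be k))\<bar> \<le> (\<Sum>k<K. \<bar>s k * (exp (al k) - exp (be k))\<bar>)" by (rule sum_abs)
      also have "\<dots> \<le> (\<Sum>k<K. s k * (exp R * rho))"
      proof (intro sum_mono)
        fix k assume k: "k \<in> {..<K}"
        have "\<bar>exp (al k) - exp (be k)\<bar> \<le> exp R * \<bar>al k - be k\<bar>"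
          using R k by (intro exp_diff_bound) (auto simp: al_def be_def)
        also have "\<dots> \<le> exp R * rho" using rho k by (intro mult_left_mono) (auto simp: al_def be_def)
        finally show "\<bar>s k * (exp (al k) - exp (be k))\<bar> \<le> s k * (exp R * rho)"
          using s_nn k by (simp add: abs_mult mult_left_mono)
      qed
      finally show ?thesis .
    qed
    moreover have "\<bar>\<Sum>k<K. (s k - t k) * (exp (be k) - 1)\<bar> \<le> (\<Sum>k<K. \<bar>s k - t k\<bar> * (exp R * R'))"
    proof -
      have "\<bar>\<Sum>k<K. (s k - t k) * (exp (be k) - 1)\<bar> \<le> (\<Sum>k<K. \<bar>(s k - t k) * (exp (be k) - 1)\<bar>)" by (rule sum_abs)
      also have "\<dots> \<le> (\<Sum>k<K. \<bar>s k - t k\<bar> * (exp R * R'))"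
      proof (intro sum_mono)
        fix k assume k: "k \<in> {..<K}"
        have "\<bar>exp (be k) - exp 0\<bar> \<le> exp R * \<bar>be k - 0\<bar>"
          using R k R0 by (intro exp_diff_bound) (auto simp: be_def)
        also have "\<dots> \<le> exp R * R'" using R' k by (intro mult_left_mono) (auto simp: be_def)
        finally show "\<bar>(s k - t k) * (exp (be k) - 1)\<bar> \<le> \<bar>s k - t k\<bar> * (exp R * R')"
          by (simp add: abs_mult mult_left_mono)
      qed
      finally show ?thesis .
    qed
    ultimately show ?thesis unfolding ABeq by (rule abs_triangle_ineq[THEN order_trans, OF add_mono])
  qed
  also have "\<dots> = exp R * rho + (\<Sum>k<K. \<bar>s k - t k\<bar>) * (exp R * R')"
    using s1 by (simp add: sum_distrib_right[symmetric])
  also have "\<dots> \<le> exp R * rho + (exp (2 * eps) - 1) * (exp R * R')"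
  proof -
    have "(\<Sum>k<K. \<bar>s k - t k\<bar>) \<le> exp (2 * eps) - 1"
      using softmax_diff[OF w eps] unfolding s_def t_def Z1_def Y1_def .
    moreover have "0 \<le> exp R * R'"
    proof -
      obtain k where "k < K" using w(2) by (cases K) auto
      then show ?thesis using R'[of k] by (intro mult_nonneg_nonneg) auto
    qed
    ultimately show ?thesis by (intro add_left_mono mult_right_mono)
  qed
  finally have AB: "\<bar>Z2 / Z1 - Y2 / Y1\<bar> \<le> exp R * (rho + (exp (2 * eps) - 1) * R')" by (simp add: algebra_simps)
  have "ln Z2 - ln Z1 - (ln Y2 - ln Y1) = ln (Z2 / Z1) - ln (Y2 / Y1)"
    using pos by (simp add: ln_div)
  also have "\<dots> \<le> (Z2 / Z1 - Y2 / Y1) / (Y2 / Y1)" using pos by (intro ln_diff_le) auto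
  also have "\<dots> \<le> \<bar>Z2 / Z1 - Y2 / Y1\<bar> / exp (- R)"
  proof -
    have "(Z2 / Z1 - Y2 / Y1) / (Y2 / Y1) \<le> \<bar>Z2 / Z1 - Y2 / Y1\<bar> / (Y2 / Y1)"
      using pos by (intro divide_right_mono) auto
    also have "\<dots> \<le> \<bar>Z2 / Z1 - Y2 / Y1\<bar> / exp (- R)"
    proof (rule divide_left_mono)
      show "0 < Y2 / Y1 * exp (- R)" using pos by simp
    qed (use Bl in auto)
    finally show ?thesis .
  qed
  also have "\<dots> = exp R * \<bar>Z2 / Z1 - Y2 / Y1\<bar>" by (simp add: exp_minus divide_inverse)
  also have "\<dots> \<le> exp R * (exp R * (rho + (exp (2 * eps) - 1) * R'))" using AB by (intro mult_left_mono) auto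
  also have "\<dots> = exp (2 * R) * (rho + (exp (2 * eps) - 1) * R')"
  proof -
    have "exp (2 * R) = exp R * exp R" by (simp add: exp_add[symmetric])
    then show ?thesis by simp
  qed
  finally show ?thesis unfolding Z1_def Z2_def Y1_def Y2_def .
qed



definition c1 :: "real \<Rightarrow> real \<Rightarrow> real" where
  "c1 tau M = exp (4 * tau * M) * (1 + 2 * tau * M * exp (4 * tau * M))"

lemma gcost_stab:
  fixes Qa Qb :: "nat \<Rightarrow> 'u::finite \<Rightarrow> real" and w :: "nat \<Rightarrow> real"
  assumes tau: "tau > 0" and w: "\<And>k. k < K \<Longrightarrow> 0 \<le> w k" "(\<Sum>k<K. w k) = 1"
    and p: "pdist p" and p': "pdist p'"
    and Ma: "\<And>k u. k < K \<Longrightarrow> \<bar>Qa k u\<bar> \<le> M" and Mb: "\<And>k u. k < K \<Longrightarrow> \<bar>Qb k u\<bar> \<le> M"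
    and Dl: "\<And>k u. k < K \<Longrightarrow> \<bar>Qa k u - Qb k u\<bar> \<le> Dl"
  shows "(gcost tau K w Qa p' - gcost tau K w Qa p) - (gcost tau K w Qb p' - gcost tau K w Qb p)
         \<le> c1 tau M * Dl * (\<Sum>u\<in>UNIV. \<bar>p u - p' u\<bar>)"
proof -
  define eta where "eta = (\<Sum>u\<in>UNIV. \<bar>p u - p' u\<bar>)"
  have eta': "(\<Sum>u\<in>UNIV. \<bar>p' u - p u\<bar>) = eta" unfolding eta_def by (simp add: abs_minus_commute)
  have eta0: "0 \<le> eta" unfolding eta_def by (simp add: sum_nonneg)
  have eta2: "eta \<le> 2" using dtv_le1[OF p p'] unfolding eta_def dtv_def by simp
  obtain k0 where k0: "k0 < K" using w(2) by (cases K) auto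
  have M0: "0 \<le> M" using Ma[OF k0, of undefined] by linarith
  have D0: "0 \<le> Dl" using Dl[OF k0, of undefined] by linarith
  define a where "a k q = (\<Sum>u\<in>UNIV. q u * Qa k u)" for k q
  define b where "b k q = (\<Sum>u\<in>UNIV. q u * Qb k u)" for k q
  define z1 where "z1 k = - tau * a k p" for k
  define z2 where "z2 k = - tau * a k p'" for k
  define y1 where "y1 k = - tau * b k p" for k
  define y2 where "y2 k = - tau * b k p'" for k
  define R where "R = 2 * tau * M"
  define R' where "R' = tau * M * eta"
  define rho where "rho = tau * Dl * eta"
  define eps where "eps = min (tau * Dl) (2 * tau * M)"
  have hz: "\<bar>z2 k - z1 k\<bar> \<le> R'" if "k < K" for k
  proof -
    have "\<bar>a k p' - a k p\<bar> \<le> M * eta" unfolding a_def using lin_diff[of "Qa k" M p' p] Ma[OF that] eta' by simp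
    then show ?thesis unfolding z1_def z2_def R'_def using tau
      by (simp add: right_diff_distrib[symmetric] abs_mult mult.assoc mult_left_mono)
  qed
  have hy: "\<bar>y2 k - y1 k\<bar> \<le> R'" if "k < K" for k
  proof -
    have "\<bar>b k p' - b k p\<bar> \<le> M * eta" unfolding b_def using lin_diff[of "Qb k" M p' p] Mb[OF that] eta' by simp
    then show ?thesis unfolding y1_def y2_def R'_def using tau
      by (simp add: right_diff_distrib[symmetric] abs_mult mult.assoc mult_left_mono)
  qed
  have R'R: "R' \<le> R"
  proof -
    have "tau * M * eta \<le> tau * M * 2" using eta2 tau M0 by (intro mult_left_mono) auto
    then show ?thesis unfolding R'_def R_def by simp
  qed
  have hrho: "\<bar>(z2 k - z1 k) - (y2 k - y1 k)\<bar> \<le> rho" if "k < K" for k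
  proof -
    have e: "(a k p' - a k p) - (b k p' - b k p) = (\<Sum>u\<in>UNIV. p' u * (Qa k u - Qb k u)) - (\<Sum>u\<in>UNIV. p u * (Qa k u - Qb k u))"
      unfolding a_def b_def by (simp add: right_diff_distrib sum_subtractf)
    have "\<bar>(\<Sum>u\<in>UNIV. p' u * (Qa k u - Qb k u)) - (\<Sum>u\<in>UNIV. p u * (Qa k u - Qb k u))\<bar> \<le> Dl * eta"
      using lin_diff[of "\<lambda>u. Qa k u - Qb k u" Dl p' p] Dl[OF that] eta' by simp
    then have "\<bar>(a k p' - a k p) - (b k p' - b k p)\<bar> \<le> Dl * eta" unfolding e .
    moreover have "(z2 k - z1 k) - (y2 k - y1 k) = - tau * ((a k p' - a k p) - (b k p' - b k p))"
      unfolding z1_def z2_def y1_def y2_def by (simp add: algebra_simps)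
    ultimately show ?thesis unfolding rho_def using tau
      by (simp add: abs_mult mult.assoc mult_left_mono)
  qed
  have heps: "\<bar>z1 k - y1 k\<bar> \<le> eps" if "k < K" for k
  proof -
    have h1: "\<bar>a k p - b k p\<bar> \<le> Dl" unfolding a_def b_def by (rule lin_diff2[OF p Dl[OF that]])
    have "\<bar>a k p\<bar> \<le> M" unfolding a_def by (rule lin_bound[OF p Ma[OF that]])
    moreover have "\<bar>b k p\<bar> \<le> M" unfolding b_def by (rule lin_bound[OF p Mb[OF that]])
    ultimately have h2: "\<bar>a k p - b k p\<bar> \<le> 2 * M" by linarith
    have "\<bar>z1 k - y1 k\<bar> = tau * \<bar>a k p - b k p\<bar>" unfolding z1_def y1_def using tau
      by (simp add: right_diff_distrib[symmetric] abs_mult)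
    then show ?thesis unfolding eps_def using h1 h2 tau by (simp add: mult_left_mono)
  qed
  have eps0: "0 \<le> eps" unfolding eps_def using tau D0 M0 by simp
  have key: "ln (\<Sum>k<K. w k * exp (z2 k)) - ln (\<Sum>k<K. w k * exp (z1 k))
          - (ln (\<Sum>k<K. w k * exp (y2 k)) - ln (\<Sum>k<K. w k * exp (y1 k)))
         \<le> exp (2 * R) * (rho + (exp (2 * eps) - 1) * R')"
  proof -
    have hzR: "\<bar>z2 k - z1 k\<bar> \<le> R" if "k < K" for k using hz[OF that] R'R by linarith
    have hyR: "\<bar>y2 k - y1 k\<bar> \<le> R" if "k < K" for k using hy[OF that] R'R by linarith
    show ?thesis by (rule lse_mixed[OF w hzR hyR hy hrho eps0 heps])
  qed
  have ee: "exp (2 * eps) - 1 \<le> exp (4 * tau * M) * (2 * tau * Dl)"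
  proof -
    have "\<bar>exp (2 * eps) - exp 0\<bar> \<le> exp (2 * eps) * \<bar>2 * eps - 0\<bar>"
      by (rule exp_diff_bound) (use eps0 in auto)
    also have "\<dots> \<le> exp (4 * tau * M) * (2 * tau * Dl)"
    proof (rule mult_mono)
      have "eps \<le> 2 * tau * M" unfolding eps_def by simp
      then show "exp (2 * eps) \<le> exp (4 * tau * M)" by (simp add: mult_ac)
      have "eps \<le> tau * Dl" unfolding eps_def by simp
      then show "\<bar>2 * eps - 0\<bar> \<le> 2 * tau * Dl" using eps0 by auto
    qed (auto simp: tau D0)
    finally show ?thesis by simp
  qed
  have R'0: "0 \<le> R'" unfolding R'_def using tau M0 eta0 by simp
  have "exp (2 * R) * (rho + (exp (2 * eps) - 1) * R') \<le> exp (2 * R) * (rho + (exp (4 * tau * M) * (2 * tau * Dl)) * R')"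
    using ee R'0 by (intro mult_left_mono add_left_mono mult_right_mono) auto
  also have "\<dots> = tau * (c1 tau M * Dl * eta)"
    unfolding R_def rho_def R'_def c1_def by (simp add: algebra_simps)
  finally have key2: "ln (\<Sum>k<K. w k * exp (z2 k)) - ln (\<Sum>k<K. w k * exp (z1 k))
          - (ln (\<Sum>k<K. w k * exp (y2 k)) - ln (\<Sum>k<K. w k * exp (y1 k)))
         \<le> tau * (c1 tau M * Dl * eta)" using key by linarith
  have gl: "(gcost tau K w Qa p' - gcost tau K w Qa p) - (gcost tau K w Qb p' - gcost tau K w Qb p)
      = (1 / tau) * (ln (\<Sum>k<K. w k * exp (z2 k)) - ln (\<Sum>k<K. w k * exp (z1 k))
          - (ln (\<Sum>k<K. w k * exp (y2 k)) - ln (\<Sum>k<K. w k * exp (y1 k))))"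
    unfolding gcost_def z1_def z2_def y1_def y2_def a_def b_def by (simp add: right_diff_distrib)
  have "(1 / tau) * (ln (\<Sum>k<K. w k * exp (z2 k)) - ln (\<Sum>k<K. w k * exp (z1 k))
          - (ln (\<Sum>k<K. w k * exp (y2 k)) - ln (\<Sum>k<K. w k * exp (y1 k)))) \<le> (1 / tau) * (tau * (c1 tau M * Dl * eta))"
    using key2 tau by (intro mult_left_mono) auto
  also have "\<dots> = c1 tau M * Dl * eta" using tau by simp
  finally show ?thesis unfolding gl eta_def .
qed



lemma opt_stab:
  fixes Qa Qb :: "nat \<Rightarrow> 'u::finite \<Rightarrow> real" and w :: "nat \<Rightarrow> real" and nu :: "('u \<Rightarrow> real) \<Rightarrow> real"
  assumes sc: "strongly_convex_simplex m nu" and m: "m > 0" and alpha: "alpha > 0"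
    and tau: "tau > 0" and w: "\<And>k. k < K \<Longrightarrow> 0 \<le> w k" "(\<Sum>k<K. w k) = 1"
    and Ma: "\<And>k u. k < K \<Longrightarrow> \<bar>Qa k u\<bar> \<le> M" and Mb: "\<And>k u. k < K \<Longrightarrow> \<bar>Qb k u\<bar> \<le> M"
    and Dl: "\<And>k u. k < K \<Longrightarrow> \<bar>Qa k u - Qb k u\<bar> \<le> Dl"
    and p: "pdist p" and minp: "\<And>q. pdist q \<Longrightarrow> gcost tau K w Qa p + alpha * nu p \<le> gcost tau K w Qa q + alpha * nu q"
    and p': "pdist p'" and minp': "\<And>q. pdist q \<Longrightarrow> gcost tau K w Qb p' + alpha * nu p' \<le> gcost tau K w Qb q + alpha * nu q"
  shows "dtv p p' \<le> real CARD('u) * c1 tau M * Dl / (alpha * m)"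
proof -
  define S where "S = (\<Sum>u\<in>UNIV. (p u - p' u)^2)"
  define eta where "eta = (\<Sum>u\<in>UNIV. \<bar>p u - p' u\<bar>)"
  define U where "U = real CARD('u)"
  obtain k0 where k0: "k0 < K" using w(2) by (cases K) auto
  have M0: "0 \<le> M" using Ma[OF k0, of undefined] by linarith
  have D0: "0 \<le> Dl" using Dl[OF k0, of undefined] by linarith
  have c10: "0 \<le> c1 tau M" unfolding c1_def using tau M0 by simp
  have U0: "0 < U" unfolding U_def by simp
  have eta0: "0 \<le> eta" unfolding eta_def by (simp add: sum_nonneg)
  have A: "alpha * m / 2 * S \<le> gcost tau K w Qa p' - gcost tau K w Qa p + gcost tau K w Qb p - gcost tau K w Qb p'"
    unfolding S_def
    by (rule argmin_stab[OF sc less_imp_le[OF alpha] gcost_mid[OF tau w] gcost_mid[OF tau w] p minp p' minp'])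
  have B: "(gcost tau K w Qa p' - gcost tau K w Qa p) - (gcost tau K w Qb p' - gcost tau K w Qb p) \<le> c1 tau M * Dl * eta"
    unfolding eta_def by (rule gcost_stab[OF tau w p p' Ma Mb Dl])
  have AB: "alpha * m / 2 * S \<le> c1 tau M * Dl * eta" using A B by linarith
  have CS: "eta^2 \<le> S * U"
  proof -
    have "(\<Sum>u\<in>UNIV. \<bar>p u - p' u\<bar> * 1)\<^sup>2 \<le> (\<Sum>u\<in>UNIV. \<bar>p u - p' u\<bar>\<^sup>2) * (\<Sum>u\<in>(UNIV::'u set). 1\<^sup>2)"
      by (rule Cauchy_Schwarz_ineq_sum)
    then show ?thesis unfolding eta_def S_def U_def by simp
  qed
  have dtv_eta: "dtv p p' = eta / 2" unfolding dtv_def eta_def by simp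
  show ?thesis
  proof (cases "eta = 0")
    case True
    then show ?thesis unfolding dtv_eta using c10 D0 alpha m by simp
  next
    case False
    then have etap: "eta > 0" using eta0 by simp
    have am: "0 < alpha * m / 2" using alpha m by simp
    have "alpha * m / 2 * eta^2 \<le> alpha * m / 2 * (S * U)" using CS am by (intro mult_left_mono) auto
    also have "\<dots> = U * (alpha * m / 2 * S)" by (simp add: algebra_simps)
    also have "\<dots> \<le> U * (c1 tau M * Dl * eta)" using AB U0 by (intro mult_left_mono) auto
    finally have "(alpha * m / 2 * eta) * eta \<le> (U * c1 tau M * Dl) * eta" by (simp add: power2_eq_square algebra_simps)
    then have "alpha * m / 2 * eta \<le> U * c1 tau M * Dl" using etap by simp
    then have "eta / 2 \<le> U * c1 tau M * Dl / (alpha * m)" using alpha m by (simp add: field_simps)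
    then show ?thesis unfolding dtv_eta U_def .
  qed
qed



lemma compact_simplex: "compact {p::'u::finite\<Rightarrow>real. pdist p}"
proof -
  have c1: "compact (PiE UNIV (\<lambda>_::'u. {0..1::real}))"
  proof -
    have "compactin (product_topology (\<lambda>_::'u. euclidean) UNIV) (PiE UNIV (\<lambda>_. {0..1::real}))"
      by (simp add: compactin_PiE)
    then show ?thesis by (simp add: euclidean_product_topology)
  qed
  have c2: "closed {p::'u\<Rightarrow>real. (\<Sum>a\<in>UNIV. p a) = 1 \<and> (\<forall>a. 0 \<le> p a)}"
  proof -
    have "closed {p::'u\<Rightarrow>real. (\<Sum>a\<in>UNIV. p a) = 1}"
      by (intro closed_Collect_eq continuous_on_sum continuous_on_const) simp_all
    moreover have "closed {p::'u\<Rightarrow>real. 0 \<le> p a}" for a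
      by (intro closed_Collect_le continuous_on_const) simp_all
    ultimately have "closed ({p::'u\<Rightarrow>real. (\<Sum>a\<in>UNIV. p a) = 1} \<inter> (\<Inter>a. {p. 0 \<le> p a}))"
      by (intro closed_Int closed_INT) auto
    moreover have "{p::'u\<Rightarrow>real. (\<Sum>a\<in>UNIV. p a) = 1} \<inter> (\<Inter>a. {p. 0 \<le> p a}) = {p::'u\<Rightarrow>real. (\<Sum>a\<in>UNIV. p a) = 1 \<and> (\<forall>a. 0 \<le> p a)}" by auto
    ultimately show ?thesis by simp
  qed
  have eq: "{p::'u\<Rightarrow>real. pdist p} = PiE UNIV (\<lambda>_. {0..1}) \<inter> {p. (\<Sum>a\<in>UNIV. p a) = 1 \<and> (\<forall>a. 0 \<le> p a)}"
  proof (rule set_eqI, rule iffI)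
    fix p :: "'u \<Rightarrow> real" assume "p \<in> {p. pdist p}"
    then have p: "\<forall>a. 0 \<le> p a" "sum p UNIV = 1" by (auto simp: pdist_def)
    have "p a \<le> 1" for a using member_le_sum[of a UNIV p] p by auto
    then show "p \<in> PiE UNIV (\<lambda>_. {0..1}) \<inter> {p. (\<Sum>a\<in>UNIV. p a) = 1 \<and> (\<forall>a. 0 \<le> p a)}"
      using p by auto
  qed (auto simp: pdist_def)
  show ?thesis unfolding eq by (rule compact_Int_closed[OF c1 c2])
qed

lemma pdist_unif: "pdist (\<lambda>u::'u::finite. 1 / real CARD('u))"
  by (simp add: pdist_def)

lemma exists_min:
  fixes Q :: "nat \<Rightarrow> 'u::finite \<Rightarrow> real" and w :: "nat \<Rightarrow> real" and nu :: "('u \<Rightarrow> real) \<Rightarrow> real"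
  assumes nu_cont: "continuous_on {p. pdist p} nu"
    and w: "\<And>k. k < K \<Longrightarrow> 0 \<le> w k" "(\<Sum>k<K. w k) = 1"
  shows "\<exists>q. pdist q \<and> (\<forall>q'. pdist q' \<longrightarrow> gcost tau K w Q q + alpha * nu q \<le> gcost tau K w Q q' + alpha * nu q')"
proof -
  have ne: "{p::'u\<Rightarrow>real. pdist p} \<noteq> {}" using pdist_unif by blast
  have cg: "continuous_on {p::'u\<Rightarrow>real. pdist p} (\<lambda>q. gcost tau K w Q q)"
    unfolding gcost_def
  proof (intro continuous_intros)
    show "\<forall>q\<in>{p. pdist p}. (\<Sum>k<K. w k * exp (- tau * (\<Sum>u\<in>UNIV. q u * Q k u))) \<noteq> 0"
      using wsum_pos[OF w] by (metis less_irrefl)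
    show "continuous_on {p. pdist p} (\<lambda>x. x u)" for u
      by (rule continuous_on_subset[OF continuous_on_product_coordinates]) simp
  qed
  have "continuous_on {p::'u\<Rightarrow>real. pdist p} (\<lambda>q. gcost tau K w Q q + alpha * nu q)"
    by (intro continuous_intros cg nu_cont)
  from continuous_attains_inf[OF compact_simplex ne this] show ?thesis by auto
qed

lemma Qrem_indep:
  "(\<And>s. s > t \<Longrightarrow> pol s = pol' s) \<Longrightarrow> Qrem f r pol mu n t x u = Qrem f r pol' mu n t x u"
proof (induction n arbitrary: t x u)
  case 0 then show ?case by simp
next
  case (Suc n)
  have "Qrem f r pol mu n (Suc t) x' u' = Qrem f r pol' mu n (Suc t) x' u'" for x' u'
    by (rule Suc.IH) (use Suc.prems in auto)
  moreover have "pol (Suc t) = pol' (Suc t)" using Suc.prems by auto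
  ultimately show ?case by simp
qed

lemma Qfun_indep:
  "(\<And>s. s > t \<Longrightarrow> pol s = pol' s) \<Longrightarrow> Qfun T f r pol mu t = Qfun T f r pol' mu t"
  unfolding Qfun_def using Qrem_indep[of t pol pol' f r mu] by blast

definition Hc where
  "Hc T f r K w tau alpha nu pol S t x q = gcost tau K w (\<lambda>k u. Qfun T f r pol (S k) t x u) q + alpha * nu q"

lemma Hc_indep:
  "(\<And>s. s > t \<Longrightarrow> pol s = pol' s) \<Longrightarrow> Hc T f r K w tau alpha nu pol S t x = Hc T f r K w tau alpha nu pol' S t x"
  unfolding Hc_def using Qfun_indep[of t pol pol' T f r] by presburger

lemma rq_cost_upd:
  "rq_cost T f r K w tau alpha nu (pol(t := p)) S t x = Hc T f r K w tau alpha nu pol S t x (p x)"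
proof -
  have "Qfun T f r (pol(t := p)) mu t = Qfun T f r pol mu t" for mu
    by (rule Qfun_indep) auto
  then show ?thesis unfolding rq_cost_def Hc_def gcost_def by simp
qed

lemma rq_cost_self:
  "rq_cost T f r K w tau alpha nu pol S t x = Hc T f r K w tau alpha nu pol S t x (pol t x)"
  using rq_cost_upd[of T f r K w tau alpha nu pol t "pol t" S x] by simp

lemma opt_resp_iff:
  fixes pol :: "nat \<Rightarrow> 'x::finite \<Rightarrow> 'u::finite \<Rightarrow> real"
  assumes "is_policy T pol"
  shows "is_opt_resp T f r K w tau alpha nu S pol \<longleftrightarrow>
    (\<forall>t<T. \<forall>x q. pdist q \<longrightarrow> Hc T f r K w tau alpha nu pol S t x (pol t x) \<le> Hc T f r K w tau alpha nu pol S t x q)"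
proof
  assume H: "is_opt_resp T f r K w tau alpha nu S pol"
  show "\<forall>t<T. \<forall>x q. pdist q \<longrightarrow> Hc T f r K w tau alpha nu pol S t x (pol t x) \<le> Hc T f r K w tau alpha nu pol S t x q"
  proof (intro allI impI)
    fix t x q assume t: "t < T" and q: "pdist (q::'u \<Rightarrow> real)"
    have "\<forall>y. pdist (((pol t)(x := q)) y)" using assms t q by (auto simp: is_policy_def)
    then have "rq_cost T f r K w tau alpha nu pol S t x \<le> rq_cost T f r K w tau alpha nu (pol(t := (pol t)(x := q))) S t x"
      using H t unfolding is_opt_resp_def by blast
    moreover have "rq_cost T f r K w tau alpha nu (pol(t := (pol t)(x := q))) S t x = Hc T f r K w tau alpha nu pol S t x q"
      by (simp add: rq_cost_upd)
    moreover have "rq_cost T f r K w tau alpha nu pol S t x = Hc T f r K w tau alpha nu pol S t x (pol t x)"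
      by (rule rq_cost_self)
    ultimately show "Hc T f r K w tau alpha nu pol S t x (pol t x) \<le> Hc T f r K w tau alpha nu pol S t x q"
      by linarith
  qed
next
  assume H: "\<forall>t<T. \<forall>x q. pdist q \<longrightarrow> Hc T f r K w tau alpha nu pol S t x (pol t x) \<le> Hc T f r K w tau alpha nu pol S t x q"
  show "is_opt_resp T f r K w tau alpha nu S pol"
    unfolding is_opt_resp_def
  proof (intro conjI assms allI impI)
    fix t x and p :: "'x \<Rightarrow> 'u \<Rightarrow> real" assume t: "t < T" and p: "\<forall>y. pdist (p y)"
    have "rq_cost T f r K w tau alpha nu (pol(t := p)) S t x = Hc T f r K w tau alpha nu pol S t x (p x)"
      by (rule rq_cost_upd)
    moreover have "rq_cost T f r K w tau alpha nu pol S t x = Hc T f r K w tau alpha nu pol S t x (pol t x)"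
      by (rule rq_cost_self)
    moreover have "Hc T f r K w tau alpha nu pol S t x (pol t x) \<le> Hc T f r K w tau alpha nu pol S t x (p x)"
      using H t p by blast
    ultimately show "rq_cost T f r K w tau alpha nu pol S t x \<le> rq_cost T f r K w tau alpha nu (pol(t := p)) S t x"
      by linarith
  qed
qed



lemma opt_exists:
  fixes S :: "nat \<Rightarrow> nat \<Rightarrow> 'x::finite \<Rightarrow> real" and nu :: "('u::finite \<Rightarrow> real) \<Rightarrow> real"
    and f :: "nat \<Rightarrow> 'x \<Rightarrow> 'u \<Rightarrow> ('x \<Rightarrow> real) \<Rightarrow> 'x \<Rightarrow> real"
  assumes nu_cont: "continuous_on {p. pdist p} nu"
    and w: "\<And>k. k < K \<Longrightarrow> 0 \<le> w k" "(\<Sum>k<K. w k) = 1"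
  shows "\<exists>pol. is_opt_resp T f r K w tau alpha nu S pol"
proof -
  let ?H = "Hc T f r K w tau alpha nu"
  have P: "\<exists>pol. is_policy T pol \<and> (\<forall>t<T. T - n \<le> t \<longrightarrow> (\<forall>x q. pdist q \<longrightarrow> ?H pol S t x (pol t x) \<le> ?H pol S t x q))" for n
  proof (induction n)
    case 0
    define pu where "pu = (\<lambda>(t::nat) (x::'x) (u::'u). if t < T then 1 / real CARD('u) else 0)"
    have "is_policy T pu" unfolding is_policy_def pu_def using pdist_unif by auto
    then show ?case by auto
  next
    case (Suc n)
    then obtain pol where pol: "is_policy T pol"
      and opt: "\<forall>t<T. T - n \<le> t \<longrightarrow> (\<forall>x q. pdist q \<longrightarrow> ?H pol S t x (pol t x) \<le> ?H pol S t x q)" by blast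
    show ?case
    proof (cases "T \<le> n")
      case True
      then have "T - Suc n = T - n" by simp
      then show ?thesis using pol opt by metis
    next
      case False
      define t0 where "t0 = T - Suc n"
      have t0T: "t0 < T" unfolding t0_def using False by simp
      have ex: "\<exists>q. pdist q \<and> (\<forall>q'. pdist q' \<longrightarrow> ?H pol S t0 x q \<le> ?H pol S t0 x q')" for x
        unfolding Hc_def by (rule exists_min[OF nu_cont w])
      define sig where "sig x = (SOME q. pdist q \<and> (\<forall>q'. pdist q' \<longrightarrow> ?H pol S t0 x q \<le> ?H pol S t0 x q'))" for x
      have sig: "pdist (sig x) \<and> (\<forall>q'. pdist q' \<longrightarrow> ?H pol S t0 x (sig x) \<le> ?H pol S t0 x q')" for x
        unfolding sig_def by (rule someI_ex[OF ex])
      define pol' where "pol' = pol(t0 := sig)"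
      have pol': "is_policy T pol'"
        using pol sig t0T unfolding is_policy_def pol'_def by auto
      have Heq: "?H pol' S t x = ?H pol S t x" if "t0 \<le> t" for t x
        by (rule Hc_indep) (use that in \<open>auto simp: pol'_def\<close>)
      have "\<forall>t<T. T - Suc n \<le> t \<longrightarrow> (\<forall>x q. pdist q \<longrightarrow> ?H pol' S t x (pol' t x) \<le> ?H pol' S t x q)"
      proof (intro allI impI)
        fix t x q assume t: "t < T" and tn: "T - Suc n \<le> t" and q: "pdist (q::'u \<Rightarrow> real)"
        have t0t: "t0 \<le> t" using tn unfolding t0_def .
        show "?H pol' S t x (pol' t x) \<le> ?H pol' S t x q"
        proof (cases "t = t0")
          case True
          then show ?thesis unfolding Heq[OF t0t] using sig q by (simp add: pol'_def)
        next
          case False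
          then have "T - n \<le> t" using tn t0_def by linarith
          then show ?thesis unfolding Heq[OF t0t] using opt t q False by (simp add: pol'_def)
        qed
      qed
      then show ?thesis using pol' by blast
    qed
  qed
  obtain pol where pol: "is_policy T pol"
    and opt: "\<forall>t<T. T - T \<le> t \<longrightarrow> (\<forall>x q. pdist q \<longrightarrow> ?H pol S t x (pol t x) \<le> ?H pol S t x q)"
    using P[of T] by blast
  have "is_opt_resp T f r K w tau alpha nu S pol"
    using opt by (subst opt_resp_iff[OF pol]) simp
  then show ?thesis by blast
qed

lemma opt_unique:
  fixes S :: "nat \<Rightarrow> nat \<Rightarrow> 'x::finite \<Rightarrow> real" and nu :: "('u::finite \<Rightarrow> real) \<Rightarrow> real"
    and f :: "nat \<Rightarrow> 'x \<Rightarrow> 'u \<Rightarrow> ('x \<Rightarrow> real) \<Rightarrow> 'x \<Rightarrow> real"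
    and pol1 pol2 :: "nat \<Rightarrow> 'x \<Rightarrow> 'u \<Rightarrow> real"
  assumes sc: "strongly_convex_simplex m nu" and m: "m > 0" and alpha: "alpha > 0" and tau: "tau > 0"
    and w: "\<And>k. k < K \<Longrightarrow> 0 \<le> w k" "(\<Sum>k<K. w k) = 1"
    and o1: "is_opt_resp T f r K w tau alpha nu S pol1"
    and o2: "is_opt_resp T f r K w tau alpha nu S pol2"
  shows "pol1 = pol2"
proof -
  let ?H = "Hc T f r K w tau alpha nu"
  have p1: "is_policy T pol1" and p2: "is_policy T pol2" using o1 o2 by (auto simp: is_opt_resp_def)
  have h1: "\<forall>t<T. \<forall>x q. pdist q \<longrightarrow> ?H pol1 S t x (pol1 t x) \<le> ?H pol1 S t x q"
    using o1 opt_resp_iff[OF p1] by blast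
  have h2: "\<forall>t<T. \<forall>x q. pdist q \<longrightarrow> ?H pol2 S t x (pol2 t x) \<le> ?H pol2 S t x q"
    using o2 opt_resp_iff[OF p2] by blast
  have P: "\<forall>t. T - n \<le> t \<longrightarrow> pol1 t = pol2 t" for n
  proof (induction n)
    case 0
    then show ?case using p1 p2 by (auto simp: is_policy_def)
  next
    case (Suc n)
    show ?case
    proof (intro allI impI)
      fix t assume tn: "T - Suc n \<le> t"
      show "pol1 t = pol2 t"
      proof (cases "T - n \<le> t")
        case True then show ?thesis using Suc.IH by blast
      next
        case False
        then have tT: "t < T" by linarith
        have agree: "pol1 s = pol2 s" if "s > t" for s
        proof -
          have "T - n \<le> s" using that False tn by linarith
          then show ?thesis using Suc.IH by blast
        qed
        show ?thesis
        proof
          fix x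
          have Heq: "?H pol2 S t x = ?H pol1 S t x" by (rule Hc_indep) (use agree in auto)
          define Q where "Q = (\<lambda>k u. Qfun T f r pol1 (S k) t x u)"
          have HQ: "?H pol1 S t x q = gcost tau K w Q q + alpha * nu q" for q unfolding Hc_def Q_def ..
          have d1: "pdist (pol1 t x)" using p1 tT by (auto simp: is_policy_def)
          have d2: "pdist (pol2 t x)" using p2 tT by (auto simp: is_policy_def)
          have m1: "gcost tau K w Q (pol1 t x) + alpha * nu (pol1 t x) \<le> gcost tau K w Q q + alpha * nu q" if "pdist q" for q
            using h1[rule_format, OF tT that, of x] unfolding HQ .
          have m2: "gcost tau K w Q (pol2 t x) + alpha * nu (pol2 t x) \<le> gcost tau K w Q q + alpha * nu q" if "pdist q" for q
            using h2[rule_format, OF tT that, of x] unfolding Heq HQ .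
          have "alpha * m / 2 * (\<Sum>u\<in>UNIV. (pol1 t x u - pol2 t x u)^2) \<le> 0"
            using argmin_stab[OF sc less_imp_le[OF alpha] gcost_mid[OF tau w] gcost_mid[OF tau w] d1 m1 d2 m2] by simp
          then have "(\<Sum>u\<in>UNIV. (pol1 t x u - pol2 t x u)^2) \<le> 0" using alpha m
            by (simp add: mult_le_0_iff)
          then have "(\<Sum>u\<in>UNIV. (pol1 t x u - pol2 t x u)^2) = 0"
            using sum_nonneg[of UNIV "\<lambda>u. (pol1 t x u - pol2 t x u)^2"] by simp
          then have "\<forall>u. (pol1 t x u - pol2 t x u)^2 = 0"
            by (simp add: sum_nonneg_eq_0_iff)
          then show "pol1 t x = pol2 t x" by auto
        qed
      qed
    qed
  qed
  show ?thesis using P[of T] by auto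
qed

lemma B_opt_spec:
  fixes S :: "nat \<Rightarrow> nat \<Rightarrow> 'x::finite \<Rightarrow> real" and nu :: "('u::finite \<Rightarrow> real) \<Rightarrow> real"
    and f :: "nat \<Rightarrow> 'x \<Rightarrow> 'u \<Rightarrow> ('x \<Rightarrow> real) \<Rightarrow> 'x \<Rightarrow> real"
  assumes sc: "strongly_convex_simplex m nu" and m: "m > 0" and alpha: "alpha > 0" and tau: "tau > 0"
    and w: "\<And>k. k < K \<Longrightarrow> 0 \<le> w k" "(\<Sum>k<K. w k) = 1"
    and nu_cont: "continuous_on {p. pdist p} nu"
  shows "is_opt_resp T f r K w tau alpha nu S (B_opt T f r K w tau alpha nu S)"
proof -
  obtain pol where "is_opt_resp T f r K w tau alpha nu S pol" using opt_exists[OF nu_cont w] by blast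
  moreover have "pol' = pol" if "is_opt_resp T f r K w tau alpha nu S pol'" "is_opt_resp T f r K w tau alpha nu S pol" for pol' pol
    by (rule opt_unique[OF sc m alpha tau w that])
  ultimately have "\<exists>!pol. is_opt_resp T f r K w tau alpha nu S pol" by blast
  then show ?thesis unfolding B_opt_def by (rule theI')
qed



lemma swap3: "(\<Sum>a\<in>A. \<Sum>b\<in>B. \<Sum>c\<in>C. g a b c) = (\<Sum>b\<in>B. \<Sum>c\<in>C. \<Sum>a\<in>A. g a b c)"
proof -
  have "(\<Sum>a\<in>A. \<Sum>b\<in>B. \<Sum>c\<in>C. g a b c) = (\<Sum>b\<in>B. \<Sum>a\<in>A. \<Sum>c\<in>C. g a b c)" by (rule sum.swap)
  also have "\<dots> = (\<Sum>b\<in>B. \<Sum>c\<in>C. \<Sum>a\<in>A. g a b c)" by (intro sum.cong refl) (rule sum.swap)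
  finally show ?thesis .
qed

locale mfg =
  fixes T K :: nat
    and f :: "nat \<Rightarrow> 'x::finite \<Rightarrow> 'u::finite \<Rightarrow> ('x \<Rightarrow> real) \<Rightarrow> 'x \<Rightarrow> real"
    and r :: "nat \<Rightarrow> 'x \<Rightarrow> 'u \<Rightarrow> ('x \<Rightarrow> real) \<Rightarrow> real"
    and mu0 :: "nat \<Rightarrow> 'x \<Rightarrow> real"
    and w :: "nat \<Rightarrow> real"
    and nu :: "('u \<Rightarrow> real) \<Rightarrow> real"
    and Rmax Lf Lr tau m :: real
  assumes T: "T \<ge> 1"
    and f_dist: "\<And>t x u mu. t < T \<Longrightarrow> pdist mu \<Longrightarrow> pdist (f t x u mu)"
    and r_bound: "\<And>t x u mu. t < T \<Longrightarrow> pdist mu \<Longrightarrow> \<bar>r t x u mu\<bar> \<le> Rmax"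
    and Lf: "Lf > 0" and Lr: "Lr > 0"
    and f_lip: "\<And>t x u mu mu'. t < T \<Longrightarrow> pdist mu \<Longrightarrow> pdist mu' \<Longrightarrow>
                  (\<Sum>x'\<in>UNIV. \<bar>f t x u mu x' - f t x u mu' x'\<bar>) \<le> Lf * dtv mu mu'"
    and r_lip: "\<And>t x u mu mu'. t < T \<Longrightarrow> pdist mu \<Longrightarrow> pdist mu' \<Longrightarrow>
                  \<bar>r t x u mu - r t x u mu'\<bar> \<le> Lr * dtv mu mu'"
    and mu0_dist: "\<And>k. k < K \<Longrightarrow> pdist (mu0 k)"
    and w_nonneg: "\<And>k. k < K \<Longrightarrow> 0 \<le> w k"
    and w_sum: "(\<Sum>k<K. w k) = 1"
    and tau: "tau > 0"
    and m: "m > 0"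
    and nu_sc: "strongly_convex_simplex m nu"
    and nu_cont: "continuous_on {p. pdist p} nu"
begin

lemma flow_pdist:
  assumes pol: "is_policy T pol" and mu: "pdist mu" 
  shows "t \<le> T \<Longrightarrow> pdist (flow f pol mu t)"
proof (induction t)
  case 0 then show ?case using mu by simp
next
  case (Suc t)
  let ?m = "flow f pol mu t"
  have tT: "t < T" using Suc.prems by simp
  have pm: "pdist ?m" using Suc.IH tT by simp
  have pp: "pdist (pol t x)" for x using pol tT by (auto simp: is_policy_def)
  have pf: "pdist (f t x u ?m)" for x u using f_dist[OF tT pm] .
  have nn: "0 \<le> flow f pol mu (Suc t) x'" for x'
    using pm pp pf by (auto simp: pdist_def intro!: sum_nonneg mult_nonneg_nonneg)
  have "(\<Sum>x'\<in>UNIV. flow f pol mu (Suc t) x') = (\<Sum>x\<in>UNIV. \<Sum>u\<in>UNIV. \<Sum>x'\<in>UNIV. f t x u ?m x' * pol t x u * ?m x)"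
    unfolding flow.simps by (rule swap3)
  also have "\<dots> = (\<Sum>x\<in>UNIV. \<Sum>u\<in>UNIV. pol t x u * ?m x)"
  proof (intro sum.cong refl)
    fix x u
    have "(\<Sum>x'\<in>UNIV. f t x u ?m x' * pol t x u * ?m x) = (\<Sum>x'\<in>UNIV. f t x u ?m x') * (pol t x u * ?m x)"
      by (simp add: sum_distrib_right mult.assoc)
    then show "(\<Sum>x'\<in>UNIV. f t x u ?m x' * pol t x u * ?m x) = pol t x u * ?m x"
      using pf[of x u] by (simp add: pdist_def)
  qed
  also have "\<dots> = (\<Sum>x\<in>UNIV. ?m x)"
  proof (intro sum.cong refl)
    fix x show "(\<Sum>u\<in>UNIV. pol t x u * ?m x) = ?m x"
      using pp[of x] by (simp add: sum_distrib_right[symmetric] pdist_def)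
  qed
  also have "\<dots> = 1" using pm by (simp add: pdist_def)
  finally show ?case using nn by (simp add: pdist_def)
qed

lemma flow_step_lip:
  assumes p1: "is_policy T p1" and p2: "is_policy T p2" and tT: "t < T"
    and m1: "pdist m1" and m2: "pdist m2"
    and d: "\<And>x. dtv (p1 t x) (p2 t x) \<le> d"
  shows "(\<Sum>x'\<in>UNIV. \<bar>(\<Sum>x\<in>UNIV. \<Sum>u\<in>UNIV. f t x u m1 x' * p1 t x u * m1 x)
             - (\<Sum>x\<in>UNIV. \<Sum>u\<in>UNIV. f t x u m2 x' * p2 t x u * m2 x)\<bar>)
         \<le> Lf * dtv m1 m2 + 2 * d + 2 * dtv m1 m2"
proof -
  define D where "D = dtv m1 m2"
  have pp1: "pdist (p1 t x)" for x using p1 tT by (auto simp: is_policy_def)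
  have pp2: "pdist (p2 t x)" for x using p2 tT by (auto simp: is_policy_def)
  have pf2: "pdist (f t x u m2)" for x u using f_dist[OF tT m2] .
  define a where "a x u = p1 t x u * m1 x" for x u
  define b where "b x u = p2 t x u * m2 x" for x u
  have a0: "0 \<le> a x u" for x u unfolding a_def using pp1 m1 by (simp add: pdist_def)
  have step1: "\<bar>(\<Sum>x\<in>UNIV. \<Sum>u\<in>UNIV. f t x u m1 x' * p1 t x u * m1 x)
             - (\<Sum>x\<in>UNIV. \<Sum>u\<in>UNIV. f t x u m2 x' * p2 t x u * m2 x)\<bar>
       \<le> (\<Sum>x\<in>UNIV. \<Sum>u\<in>UNIV. \<bar>f t x u m1 x' - f t x u m2 x'\<bar> * a x u + f t x u m2 x' * \<bar>a x u - b x u\<bar>)" for x'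
  proof -
    have "(\<Sum>x\<in>UNIV. \<Sum>u\<in>UNIV. f t x u m1 x' * p1 t x u * m1 x)
             - (\<Sum>x\<in>UNIV. \<Sum>u\<in>UNIV. f t x u m2 x' * p2 t x u * m2 x)
        = (\<Sum>x\<in>UNIV. \<Sum>u\<in>UNIV. f t x u m1 x' * p1 t x u * m1 x - f t x u m2 x' * p2 t x u * m2 x)"
      by (simp add: sum_subtractf)
    also have "\<bar>\<dots>\<bar> \<le> (\<Sum>x\<in>UNIV. \<bar>\<Sum>u\<in>UNIV. f t x u m1 x' * p1 t x u * m1 x - f t x u m2 x' * p2 t x u * m2 x\<bar>)"
      by (rule sum_abs)
    also have "\<dots> \<le> (\<Sum>x\<in>UNIV. \<Sum>u\<in>UNIV. \<bar>f t x u m1 x' - f t x u m2 x'\<bar> * a x u + f t x u m2 x' * \<bar>a x u - b x u\<bar>)"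
    proof (intro sum_mono)
      fix x
      have "\<bar>\<Sum>u\<in>UNIV. f t x u m1 x' * p1 t x u * m1 x - f t x u m2 x' * p2 t x u * m2 x\<bar>
          \<le> (\<Sum>u\<in>UNIV. \<bar>f t x u m1 x' * p1 t x u * m1 x - f t x u m2 x' * p2 t x u * m2 x\<bar>)" by (rule sum_abs)
      also have "\<dots> \<le> (\<Sum>u\<in>UNIV. \<bar>f t x u m1 x' - f t x u m2 x'\<bar> * a x u + f t x u m2 x' * \<bar>a x u - b x u\<bar>)"
      proof (intro sum_mono)
        fix u
        have e: "f t x u m1 x' * p1 t x u * m1 x - f t x u m2 x' * p2 t x u * m2 x
             = (f t x u m1 x' - f t x u m2 x') * a x u + f t x u m2 x' * (a x u - b x u)"
          unfolding a_def b_def by (simp add: algebra_simps)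
        have f0: "0 \<le> f t x u m2 x'" using pf2 by (simp add: pdist_def)
        show "\<bar>f t x u m1 x' * p1 t x u * m1 x - f t x u m2 x' * p2 t x u * m2 x\<bar>
            \<le> \<bar>f t x u m1 x' - f t x u m2 x'\<bar> * a x u + f t x u m2 x' * \<bar>a x u - b x u\<bar>"
          unfolding e using a0[of x u] f0 by (simp add: abs_mult abs_triangle_ineq[THEN order_trans])
      qed
      finally show "\<bar>\<Sum>u\<in>UNIV. f t x u m1 x' * p1 t x u * m1 x - f t x u m2 x' * p2 t x u * m2 x\<bar>
          \<le> (\<Sum>u\<in>UNIV. \<bar>f t x u m1 x' - f t x u m2 x'\<bar> * a x u + f t x u m2 x' * \<bar>a x u - b x u\<bar>)" .
    qed
    finally show ?thesis .
  qed
  have "(\<Sum>x'\<in>UNIV. \<bar>(\<Sum>x\<in>UNIV. \<Sum>u\<in>UNIV. f t x u m1 x' * p1 t x u * m1 x)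
             - (\<Sum>x\<in>UNIV. \<Sum>u\<in>UNIV. f t x u m2 x' * p2 t x u * m2 x)\<bar>)
      \<le> (\<Sum>x'\<in>UNIV. \<Sum>x\<in>UNIV. \<Sum>u\<in>UNIV. \<bar>f t x u m1 x' - f t x u m2 x'\<bar> * a x u + f t x u m2 x' * \<bar>a x u - b x u\<bar>)"
    by (intro sum_mono step1)
  also have "\<dots> = (\<Sum>x\<in>UNIV. \<Sum>u\<in>UNIV. \<Sum>x'\<in>UNIV. \<bar>f t x u m1 x' - f t x u m2 x'\<bar> * a x u + f t x u m2 x' * \<bar>a x u - b x u\<bar>)"
    by (rule swap3)
  also have "\<dots> = (\<Sum>x\<in>UNIV. \<Sum>u\<in>UNIV. (\<Sum>x'\<in>UNIV. \<bar>f t x u m1 x' - f t x u m2 x'\<bar>) * a x u + (\<Sum>x'\<in>UNIV. f t x u m2 x') * \<bar>a x u - b x u\<bar>)"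
    by (simp add: sum.distrib sum_distrib_right)
  also have "\<dots> \<le> (\<Sum>x\<in>UNIV. \<Sum>u\<in>UNIV. (Lf * D) * a x u + \<bar>a x u - b x u\<bar>)"
  proof (intro sum_mono)
    fix x u
    have "(\<Sum>x'\<in>UNIV. \<bar>f t x u m1 x' - f t x u m2 x'\<bar>) \<le> Lf * D" unfolding D_def by (rule f_lip[OF tT m1 m2])
    then have "(\<Sum>x'\<in>UNIV. \<bar>f t x u m1 x' - f t x u m2 x'\<bar>) * a x u \<le> (Lf * D) * a x u"
      using a0[of x u] by (rule mult_right_mono)
    moreover have "(\<Sum>x'\<in>UNIV. f t x u m2 x') = 1" using pf2 by (simp add: pdist_def)
    ultimately show "(\<Sum>x'\<in>UNIV. \<bar>f t x u m1 x' - f t x u m2 x'\<bar>) * a x u + (\<Sum>x'\<in>UNIV. f t x u m2 x') * \<bar>a x u - b x u\<bar>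
        \<le> (Lf * D) * a x u + \<bar>a x u - b x u\<bar>" by simp
  qed
  also have "\<dots> = (Lf * D) * (\<Sum>x\<in>UNIV. \<Sum>u\<in>UNIV. a x u) + (\<Sum>x\<in>UNIV. \<Sum>u\<in>UNIV. \<bar>a x u - b x u\<bar>)"
    by (simp add: sum.distrib sum_distrib_left)
  also have "(\<Sum>x\<in>UNIV. \<Sum>u\<in>UNIV. a x u) = 1"
  proof -
    have "(\<Sum>u\<in>UNIV. a x u) = m1 x" for x unfolding a_def using pp1[of x]
      by (simp add: sum_distrib_right[symmetric] pdist_def)
    then show ?thesis using m1 by (simp add: pdist_def)
  qed
  also have "(\<Sum>x\<in>UNIV. \<Sum>u\<in>UNIV. \<bar>a x u - b x u\<bar>) \<le> 2 * d + 2 * D"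
  proof -
    have "(\<Sum>u\<in>UNIV. \<bar>a x u - b x u\<bar>) \<le> 2 * d * m1 x + \<bar>m1 x - m2 x\<bar>" for x
    proof -
      have "(\<Sum>u\<in>UNIV. \<bar>a x u - b x u\<bar>) \<le> (\<Sum>u\<in>UNIV. \<bar>p1 t x u - p2 t x u\<bar> * m1 x + p2 t x u * \<bar>m1 x - m2 x\<bar>)"
      proof (intro sum_mono)
        fix u
        have e: "a x u - b x u = (p1 t x u - p2 t x u) * m1 x + p2 t x u * (m1 x - m2 x)"
          unfolding a_def b_def by (simp add: algebra_simps)
        have "0 \<le> m1 x" "0 \<le> p2 t x u" using m1 pp2[of x] by (auto simp: pdist_def)
        then show "\<bar>a x u - b x u\<bar> \<le> \<bar>p1 t x u - p2 t x u\<bar> * m1 x + p2 t x u * \<bar>m1 x - m2 x\<bar>"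
          unfolding e by (simp add: abs_mult abs_triangle_ineq[THEN order_trans])
      qed
      also have "\<dots> = 2 * dtv (p1 t x) (p2 t x) * m1 x + \<bar>m1 x - m2 x\<bar>"
        using pp2[of x] by (simp add: sum.distrib sum_distrib_right[symmetric] dtv_def pdist_def)
      also have "\<dots> \<le> 2 * d * m1 x + \<bar>m1 x - m2 x\<bar>"
        using d[of x] m1 by (simp add: pdist_def mult_right_mono)
      finally show ?thesis .
    qed
    then have "(\<Sum>x\<in>UNIV. \<Sum>u\<in>UNIV. \<bar>a x u - b x u\<bar>) \<le> (\<Sum>x\<in>UNIV. 2 * d * m1 x + \<bar>m1 x - m2 x\<bar>)"
      by (intro sum_mono)
    also have "\<dots> = 2 * d + 2 * D"
      using m1 by (simp add: sum.distrib sum_distrib_left[symmetric] pdist_def D_def dtv_def)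
    finally show ?thesis .
  qed
  finally show ?thesis unfolding D_def by simp
qed

lemma flow_lip:
  assumes p1: "is_policy T p1" and p2: "is_policy T p2" and mu: "pdist mu"
    and d: "\<And>t x. t < T \<Longrightarrow> dtv (p1 t x) (p2 t x) \<le> d" and d0: "0 \<le> d"
  shows "t \<le> T \<Longrightarrow> dtv (flow f p1 mu t) (flow f p2 mu t) \<le> (Lf / 2 + 2) ^ t * d"
proof (induction t)
  case 0 then show ?case using d0 by (simp add: dtv_def)
next
  case (Suc t)
  have tT: "t < T" using Suc.prems by simp
  define D where "D = dtv (flow f p1 mu t) (flow f p2 mu t)"
  have IH: "D \<le> (Lf / 2 + 2) ^ t * d" unfolding D_def using Suc.IH tT by simp
  have m1: "pdist (flow f p1 mu t)" using flow_pdist[OF p1 mu] tT by simp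
  have m2: "pdist (flow f p2 mu t)" using flow_pdist[OF p2 mu] tT by simp
  have "dtv (flow f p1 mu (Suc t)) (flow f p2 mu (Suc t)) \<le> (Lf * D + 2 * d + 2 * D) / 2"
    using flow_step_lip[OF p1 p2 tT m1 m2 d[OF tT]] unfolding D_def by (simp add: dtv_def)
  also have "\<dots> = (Lf / 2 + 1) * D + d" by (simp add: algebra_simps)
  also have "\<dots> \<le> (Lf / 2 + 1) * ((Lf / 2 + 2) ^ t * d) + (Lf / 2 + 2) ^ t * d"
  proof (intro add_mono mult_left_mono IH)
    have "1 \<le> (Lf / 2 + 2) ^ t" using Lf by (intro one_le_power) simp
    then show "d \<le> (Lf / 2 + 2) ^ t * d" using d0 by (simp add: mult_le_cancel_right1)
  qed (use Lf in simp)
  also have "\<dots> = (Lf / 2 + 2) ^ Suc t * d" by (simp add: algebra_simps)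
  finally show ?case .
qed

lemma Rmax0: "0 \<le> Rmax"
proof -
  have "pdist (mu0 0)" using mu0_dist w_sum by (cases K) auto
  then show ?thesis using r_bound[of 0 "mu0 0"] T by (meson abs_ge_zero less_le_trans order_trans zero_less_one)
qed

lemma Qrem_bound:
  assumes sig: "is_policy T sig" and mu: "\<And>s. s < T \<Longrightarrow> pdist (mu s)"
  shows "t + n < T \<Longrightarrow> \<bar>Qrem f r sig mu n t x u\<bar> \<le> (n + 1) * Rmax"
proof (induction n arbitrary: t x u)
  case 0 then show ?case using r_bound mu by simp
next
  case (Suc n)
  have tT: "t < T" and t1: "Suc t < T" using Suc.prems by auto
  have IH: "\<bar>Qrem f r sig mu n (Suc t) x' u'\<bar> \<le> (n + 1) * Rmax" for x' u'
    using Suc.IH[of "Suc t" x' u'] Suc.prems by (simp add: add_ac)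
  have V: "\<bar>\<Sum>u'\<in>UNIV. sig (Suc t) x' u' * Qrem f r sig mu n (Suc t) x' u'\<bar> \<le> (n + 1) * Rmax" for x'
    using sig t1 IH by (intro lin_bound) (auto simp: is_policy_def)
  have W: "\<bar>\<Sum>x'\<in>UNIV. f t x u (mu t) x' * (\<Sum>u'\<in>UNIV. sig (Suc t) x' u' * Qrem f r sig mu n (Suc t) x' u')\<bar> \<le> (n + 1) * Rmax"
    by (rule lin_bound[OF f_dist[OF tT mu[OF tT]] V])
  have "\<bar>r t x u (mu t)\<bar> \<le> Rmax" using r_bound[OF tT mu[OF tT]] .
  then show ?case using W by (simp add: algebra_simps abs_triangle_ineq[THEN order_trans])
qed

lemma Qfun_bound:
  assumes sig: "is_policy T sig" and mu: "\<And>s. s < T \<Longrightarrow> pdist (mu s)" and tT: "t < T"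
  shows "\<bar>Qfun T f r sig mu t x u\<bar> \<le> real T * Rmax"
proof -
  have "\<bar>Qfun T f r sig mu t x u\<bar> \<le> real (T - 1 - t + 1) * Rmax"
    unfolding Qfun_def using Qrem_bound[OF sig mu, where t=t and n="T - 1 - t"] tT by simp
  also have "\<dots> \<le> T * Rmax" using tT Rmax0 by (intro mult_right_mono) auto
  finally show ?thesis .
qed

lemma Qrem_diff_step:
  assumes s1: "is_policy T s1" and s2: "is_policy T s2"
    and mu1: "\<And>s. s < T \<Longrightarrow> pdist (mu1 s)" and mu2: "\<And>s. s < T \<Longrightarrow> pdist (mu2 s)"
    and D: "\<And>s. s < T \<Longrightarrow> dtv (mu1 s) (mu2 s) \<le> D"
    and tn: "Suc (t + n) < T"
    and Dl: "\<And>x' u'. \<bar>Qrem f r s1 mu1 n (Suc t) x' u' - Qrem f r s2 mu2 n (Suc t) x' u'\<bar> \<le> Dl"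
    and e: "\<And>x'. dtv (s1 (Suc t) x') (s2 (Suc t) x') \<le> e"
  shows "\<bar>Qrem f r s1 mu1 (Suc n) t x u - Qrem f r s2 mu2 (Suc n) t x u\<bar>
         \<le> Lr * D + Lf * D * (real T * Rmax) + 2 * (real T * Rmax) * e + Dl"
proof -
  define QM where "QM = real T * Rmax"
  have tT: "t < T" and t1: "Suc t < T" using tn by auto
  define Q1 where "Q1 x' u' = Qrem f r s1 mu1 n (Suc t) x' u'" for x' u'
  define Q2 where "Q2 x' u' = Qrem f r s2 mu2 n (Suc t) x' u'" for x' u'
  have Q1b: "\<bar>Q1 x' u'\<bar> \<le> QM" for x' u'
  proof -
    have "\<bar>Q1 x' u'\<bar> \<le> real (n + 1) * Rmax" unfolding Q1_def
      using Qrem_bound[where sig=s1 and mu=mu1, OF s1 mu1, where t="Suc t" and n=n and x=x' and u=u'] tn by (simp add: add_ac)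
    also have "\<dots> \<le> QM" unfolding QM_def using tn Rmax0 by (intro mult_right_mono) auto
    finally show ?thesis .
  qed
  have ps1: "pdist (s1 (Suc t) x')" for x' using s1 t1 by (auto simp: is_policy_def)
  have ps2: "pdist (s2 (Suc t) x')" for x' using s2 t1 by (auto simp: is_policy_def)
  define V1 where "V1 x' = (\<Sum>u'\<in>UNIV. s1 (Suc t) x' u' * Q1 x' u')" for x'
  define V2 where "V2 x' = (\<Sum>u'\<in>UNIV. s2 (Suc t) x' u' * Q2 x' u')" for x'
  have V1b: "\<bar>V1 x'\<bar> \<le> QM" for x' unfolding V1_def by (rule lin_bound[OF ps1 Q1b])
  have Vd: "\<bar>V1 x' - V2 x'\<bar> \<le> 2 * QM * e + Dl" for x'
  proof -
    have a: "\<bar>(\<Sum>u'\<in>UNIV. s1 (Suc t) x' u' * Q1 x' u') - (\<Sum>u'\<in>UNIV. s2 (Suc t) x' u' * Q1 x' u')\<bar>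
        \<le> QM * (\<Sum>u'\<in>UNIV. \<bar>s1 (Suc t) x' u' - s2 (Suc t) x' u'\<bar>)"
      by (rule lin_diff) (rule Q1b)
    have "QM * (\<Sum>u'\<in>UNIV. \<bar>s1 (Suc t) x' u' - s2 (Suc t) x' u'\<bar>) = 2 * QM * dtv (s1 (Suc t) x') (s2 (Suc t) x')"
      by (simp add: dtv_def)
    also have "\<dots> \<le> 2 * QM * e" using e[of x'] Rmax0 unfolding QM_def by (intro mult_left_mono) auto
    finally have a': "\<bar>(\<Sum>u'\<in>UNIV. s1 (Suc t) x' u' * Q1 x' u') - (\<Sum>u'\<in>UNIV. s2 (Suc t) x' u' * Q1 x' u')\<bar> \<le> 2 * QM * e"
      using a by linarith
    have b: "\<bar>(\<Sum>u'\<in>UNIV. s2 (Suc t) x' u' * Q1 x' u') - (\<Sum>u'\<in>UNIV. s2 (Suc t) x' u' * Q2 x' u')\<bar> \<le> Dl"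
      by (rule lin_diff2[OF ps2]) (use Dl in \<open>simp add: Q1_def Q2_def\<close>)
    show ?thesis unfolding V1_def V2_def using a' b by linarith
  qed
  have pF1: "pdist (f t x u (mu1 t))" using f_dist[OF tT mu1[OF tT]] .
  have pF2: "pdist (f t x u (mu2 t))" using f_dist[OF tT mu2[OF tT]] .
  have c: "\<bar>(\<Sum>x'\<in>UNIV. f t x u (mu1 t) x' * V1 x') - (\<Sum>x'\<in>UNIV. f t x u (mu2 t) x' * V1 x')\<bar>
      \<le> QM * (\<Sum>x'\<in>UNIV. \<bar>f t x u (mu1 t) x' - f t x u (mu2 t) x'\<bar>)"
    by (rule lin_diff) (rule V1b)
  have "QM * (\<Sum>x'\<in>UNIV. \<bar>f t x u (mu1 t) x' - f t x u (mu2 t) x'\<bar>) \<le> QM * (Lf * dtv (mu1 t) (mu2 t))"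
    using f_lip[OF tT mu1[OF tT] mu2[OF tT]] Rmax0 unfolding QM_def by (intro mult_left_mono) auto
  also have "\<dots> \<le> QM * (Lf * D)" using D[OF tT] Lf Rmax0 unfolding QM_def by (intro mult_left_mono) auto
  finally have c': "\<bar>(\<Sum>x'\<in>UNIV. f t x u (mu1 t) x' * V1 x') - (\<Sum>x'\<in>UNIV. f t x u (mu2 t) x' * V1 x')\<bar> \<le> QM * (Lf * D)"
    using c by linarith
  have d: "\<bar>(\<Sum>x'\<in>UNIV. f t x u (mu2 t) x' * V1 x') - (\<Sum>x'\<in>UNIV. f t x u (mu2 t) x' * V2 x')\<bar> \<le> 2 * QM * e + Dl"
    by (rule lin_diff2[OF pF2 Vd])
  have rr: "\<bar>r t x u (mu1 t) - r t x u (mu2 t)\<bar> \<le> Lr * D"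
  proof -
    have "\<bar>r t x u (mu1 t) - r t x u (mu2 t)\<bar> \<le> Lr * dtv (mu1 t) (mu2 t)" by (rule r_lip[OF tT mu1[OF tT] mu2[OF tT]])
    also have "\<dots> \<le> Lr * D" using D[OF tT] Lr by (intro mult_left_mono) auto
    finally show ?thesis .
  qed
  have eq: "Qrem f r s1 mu1 (Suc n) t x u - Qrem f r s2 mu2 (Suc n) t x u
      = (r t x u (mu1 t) - r t x u (mu2 t)) + ((\<Sum>x'\<in>UNIV. f t x u (mu1 t) x' * V1 x') - (\<Sum>x'\<in>UNIV. f t x u (mu2 t) x' * V1 x'))
        + ((\<Sum>x'\<in>UNIV. f t x u (mu2 t) x' * V1 x') - (\<Sum>x'\<in>UNIV. f t x u (mu2 t) x' * V2 x'))"
    unfolding V1_def V2_def Q1_def Q2_def by simp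
  show ?thesis unfolding eq QM_def[symmetric] using rr c' d
    by (simp add: abs_triangle_ineq[THEN order_trans] algebra_simps)
qed

definition "QM = real T * Rmax"
definition "Bc = Lr + Lf * QM"
definition "c0 = real CARD('u) * c1 tau QM / m"
definition "CF = (Lf / 2 + 2) ^ T"
definition "Kc = c0 * Bc * (2 * QM + 2) ^ T * CF"

lemma QM0: "0 \<le> QM" unfolding QM_def using Rmax0 by simp
lemma Bc0: "0 \<le> Bc" unfolding Bc_def using QM0 Lf Lr by simp
lemma c00: "0 \<le> c0" unfolding c0_def c1_def using QM0 tau m by simp
lemma CF1: "1 \<le> CF" unfolding CF_def using Lf by (intro one_le_power) simp
lemma Kc0: "0 \<le> Kc" unfolding Kc_def using c00 Bc0 CF1 QM0 by simp

lemma wK: "\<And>k. k < K \<Longrightarrow> 0 \<le> w k" "(\<Sum>k<K. w k) = 1" using w_nonneg w_sum by auto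

lemma Bopt_spec: "alpha > 0 \<Longrightarrow> is_opt_resp T f r K w tau alpha nu S (B_opt T f r K w tau alpha nu S)"
  by (rule B_opt_spec[OF nu_sc m _ tau wK nu_cont])

lemma Bopt_policy: "alpha > 0 \<Longrightarrow> is_policy T (B_opt T f r K w tau alpha nu S)"
  using Bopt_spec by (simp add: is_opt_resp_def)

lemma Bprop_pdist: "is_policy T pol \<Longrightarrow> k < K \<Longrightarrow> s \<le> T \<Longrightarrow> pdist (B_prop f K mu0 pol k s)"
  unfolding B_prop_def using flow_pdist mu0_dist by simp

lemma stab_t:
  fixes S S' :: "nat \<Rightarrow> nat \<Rightarrow> 'x \<Rightarrow> real"
  assumes alpha: "alpha > 0"
    and S: "\<And>k s. k < K \<Longrightarrow> s < T \<Longrightarrow> pdist (S k s)" and S': "\<And>k s. k < K \<Longrightarrow> s < T \<Longrightarrow> pdist (S' k s)"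
    and tT: "t < T"
    and Dl: "\<And>k x u. k < K \<Longrightarrow> \<bar>Qfun T f r (B_opt T f r K w tau alpha nu S) (S k) t x u
                 - Qfun T f r (B_opt T f r K w tau alpha nu S') (S' k) t x u\<bar> \<le> Dl"
  shows "dtv (B_opt T f r K w tau alpha nu S t x) (B_opt T f r K w tau alpha nu S' t x) \<le> c0 * Dl / alpha"
proof -
  define s1 where "s1 = B_opt T f r K w tau alpha nu S"
  define s2 where "s2 = B_opt T f r K w tau alpha nu S'"
  have o1: "is_opt_resp T f r K w tau alpha nu S s1" unfolding s1_def by (rule Bopt_spec[OF alpha])
  have o2: "is_opt_resp T f r K w tau alpha nu S' s2" unfolding s2_def by (rule Bopt_spec[OF alpha])
  have p1: "is_policy T s1" and p2: "is_policy T s2" using o1 o2 by (auto simp: is_opt_resp_def)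
  have h1: "\<forall>t<T. \<forall>x q. pdist q \<longrightarrow> Hc T f r K w tau alpha nu s1 S t x (s1 t x) \<le> Hc T f r K w tau alpha nu s1 S t x q"
    using o1 opt_resp_iff[OF p1] by blast
  have h2: "\<forall>t<T. \<forall>x q. pdist q \<longrightarrow> Hc T f r K w tau alpha nu s2 S' t x (s2 t x) \<le> Hc T f r K w tau alpha nu s2 S' t x q"
    using o2 opt_resp_iff[OF p2] by blast
  define Qa where "Qa = (\<lambda>k u. Qfun T f r s1 (S k) t x u)"
  define Qb where "Qb = (\<lambda>k u. Qfun T f r s2 (S' k) t x u)"
  have Ma: "\<bar>Qa k u\<bar> \<le> QM" if "k < K" for k u
    unfolding Qa_def QM_def by (rule Qfun_bound[OF p1 S[OF that] tT])
  have Mb: "\<bar>Qb k u\<bar> \<le> QM" if "k < K" for k u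
    unfolding Qb_def QM_def by (rule Qfun_bound[OF p2 S'[OF that] tT])
  have Dl': "\<bar>Qa k u - Qb k u\<bar> \<le> Dl" if "k < K" for k u
    unfolding Qa_def Qb_def s1_def s2_def by (rule Dl[OF that])
  have d1: "pdist (s1 t x)" using p1 tT by (auto simp: is_policy_def)
  have d2: "pdist (s2 t x)" using p2 tT by (auto simp: is_policy_def)
  have m1: "gcost tau K w Qa (s1 t x) + alpha * nu (s1 t x) \<le> gcost tau K w Qa q + alpha * nu q" if "pdist q" for q
    using h1[rule_format, OF tT that, of x] unfolding Hc_def Qa_def .
  have m2: "gcost tau K w Qb (s2 t x) + alpha * nu (s2 t x) \<le> gcost tau K w Qb q + alpha * nu q" if "pdist q" for q
    using h2[rule_format, OF tT that, of x] unfolding Hc_def Qb_def .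
  have "dtv (s1 t x) (s2 t x) \<le> real CARD('u) * c1 tau QM * Dl / (alpha * m)"
    by (rule opt_stab[OF nu_sc m alpha tau wK Ma Mb Dl' d1 m1 d2 m2])
  also have "\<dots> = c0 * Dl / alpha" unfolding c0_def using m alpha by (simp add: field_simps)
  finally show ?thesis unfolding s1_def s2_def .
qed

lemma contraction:
  fixes p1 p2 :: "nat \<Rightarrow> 'x \<Rightarrow> 'u \<Rightarrow> real"
  assumes alpha: "alpha \<ge> c0" "alpha > 0"
    and p1: "is_policy T p1" and p2: "is_policy T p2"
    and d0: "0 \<le> d" and dd: "\<And>t x. t < T \<Longrightarrow> dtv (p1 t x) (p2 t x) \<le> d"
    and tT: "t < T"
  shows "dtv (B_opt T f r K w tau alpha nu (B_prop f K mu0 p1) t x) (B_opt T f r K w tau alpha nu (B_prop f K mu0 p2) t x)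
         \<le> Kc * d / alpha"
proof -
  define S where "S = B_prop f K mu0 p1"
  define S' where "S' = B_prop f K mu0 p2"
  define s1 where "s1 = B_opt T f r K w tau alpha nu S"
  define s2 where "s2 = B_opt T f r K w tau alpha nu S'"
  define D where "D = CF * d"
  have D0: "0 \<le> D" unfolding D_def using CF1 d0 by simp
  have ps1: "is_policy T s1" unfolding s1_def by (rule Bopt_policy[OF alpha(2)])
  have ps2: "is_policy T s2" unfolding s2_def by (rule Bopt_policy[OF alpha(2)])
  have SS: "pdist (S k s)" if "k < K" "s < T" for k s unfolding S_def using Bprop_pdist[OF p1 that(1)] that(2) by simp
  have SS': "pdist (S' k s)" if "k < K" "s < T" for k s unfolding S'_def using Bprop_pdist[OF p2 that(1)] that(2) by simp
  have SD: "dtv (S k s) (S' k s) \<le> D" if "k < K" "s < T" for k s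
  proof -
    have "dtv (S k s) (S' k s) \<le> (Lf / 2 + 2) ^ s * d"
      unfolding S_def S'_def B_prop_def using that flow_lip[OF p1 p2 mu0_dist[OF that(1)] dd d0, of s] by simp
    also have "\<dots> \<le> CF * d" unfolding CF_def using that Lf d0
      by (intro mult_right_mono power_increasing) auto
    finally show ?thesis unfolding D_def .
  qed
  have claim: "n < T \<Longrightarrow> (\<forall>k<K. \<forall>x u. \<bar>Qfun T f r s1 (S k) (T - 1 - n) x u - Qfun T f r s2 (S' k) (T - 1 - n) x u\<bar>
                  \<le> Bc * (2 * QM + 2) ^ n * D)" for n
  proof (induction n)
    case 0
    show ?case
    proof (intro allI impI)
      fix k x u assume k: "k < K"
      have T1: "T - 1 < T" using T by simp
      have "\<bar>Qfun T f r s1 (S k) (T - 1 - 0) x u - Qfun T f r s2 (S' k) (T - 1 - 0) x u\<bar>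
           = \<bar>r (T - 1) x u (S k (T - 1)) - r (T - 1) x u (S' k (T - 1))\<bar>" by (simp add: Qfun_def)
      also have "\<dots> \<le> Lr * dtv (S k (T - 1)) (S' k (T - 1))" by (rule r_lip[OF T1 SS[OF k T1] SS'[OF k T1]])
      also have "\<dots> \<le> Lr * D" using SD[OF k T1] Lr by (intro mult_left_mono) auto
      also have "\<dots> \<le> Bc * (2 * QM + 2) ^ 0 * D" unfolding Bc_def using Lf QM0 D0 by (simp add: algebra_simps)
      finally show "\<bar>Qfun T f r s1 (S k) (T - 1 - 0) x u - Qfun T f r s2 (S' k) (T - 1 - 0) x u\<bar> \<le> Bc * (2 * QM + 2) ^ 0 * D" .
    qed
  next
    case (Suc n)
    define t where "t = T - 1 - Suc n"
    have nT: "n < T" using Suc.prems by simp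
    have IH: "\<bar>Qfun T f r s1 (S k) (Suc t) x u - Qfun T f r s2 (S' k) (Suc t) x u\<bar> \<le> Bc * (2 * QM + 2) ^ n * D" if "k < K" for k x u
    proof -
      have "Suc t = T - 1 - n" unfolding t_def using Suc.prems by simp
      then show ?thesis using Suc.IH[OF nT] that by simp
    qed
    have Suct: "T - 1 - Suc t = n" and tT': "Suc t < T" and tsn: "T - 1 - t = Suc n" and tn: "Suc (t + n) < T"
      unfolding t_def using Suc.prems by auto
    define Dn where "Dn = Bc * (2 * QM + 2) ^ n * D"
    have Dn0: "0 \<le> Dn" unfolding Dn_def using Bc0 QM0 D0 by simp
    have e: "dtv (s1 (Suc t) x') (s2 (Suc t) x') \<le> Dn" for x'
    proof -
      have "dtv (s1 (Suc t) x') (s2 (Suc t) x') \<le> c0 * Dn / alpha"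
        unfolding s1_def s2_def
        by (rule stab_t[OF alpha(2) SS SS' tT']) (simp_all add: IH[unfolded s1_def s2_def Dn_def[symmetric]])
      also have "\<dots> \<le> Dn"
      proof -
        have "c0 * Dn \<le> alpha * Dn" using alpha Dn0 by (intro mult_right_mono) auto
        then have "c0 * Dn / alpha \<le> alpha * Dn / alpha" using alpha by (intro divide_right_mono) auto
        then show ?thesis using alpha by simp
      qed
      finally show ?thesis .
    qed
    show ?case
    proof (intro allI impI)
      fix k x u assume k: "k < K"
      have "\<bar>Qfun T f r s1 (S k) (T - 1 - Suc n) x u - Qfun T f r s2 (S' k) (T - 1 - Suc n) x u\<bar>
          = \<bar>Qrem f r s1 (S k) (Suc n) t x u - Qrem f r s2 (S' k) (Suc n) t x u\<bar>"
        unfolding t_def[symmetric] Qfun_def tsn ..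
      also have "\<dots> \<le> Lr * D + Lf * D * (real T * Rmax) + 2 * (real T * Rmax) * Dn + Dn"
      proof (rule Qrem_diff_step[OF ps1 ps2 SS[OF k] SS'[OF k] SD[OF k] tn])
        show "\<bar>Qrem f r s1 (S k) n (Suc t) x' u' - Qrem f r s2 (S' k) n (Suc t) x' u'\<bar> \<le> Dn" for x' u'
          using IH[OF k, of x' u'] unfolding Qfun_def Suct Dn_def .
        show "dtv (s1 (Suc t) x') (s2 (Suc t) x') \<le> Dn" for x' by (rule e)
      qed
      also have "\<dots> = Bc * D + (2 * QM + 1) * Dn" unfolding Bc_def QM_def by (simp add: algebra_simps)
      also have "\<dots> \<le> Bc * (2 * QM + 2) ^ Suc n * D"
      proof -
        have "1 \<le> (2 * QM + 2) ^ n" using QM0 by (intro one_le_power) simp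
        then have "(Bc * D) * 1 \<le> (Bc * D) * (2 * QM + 2) ^ n" using Bc0 D0
          by (intro mult_left_mono) auto
        then have "Bc * D + (2 * QM + 1) * Dn \<le> (Bc * D) * (2 * QM + 2) ^ n + (2 * QM + 1) * ((Bc * D) * (2 * QM + 2) ^ n)"
          unfolding Dn_def by (simp add: mult_ac)
        also have "\<dots> = Bc * (2 * QM + 2) ^ Suc n * D" by (simp add: algebra_simps)
        finally show ?thesis .
      qed
      finally show "\<bar>Qfun T f r s1 (S k) (T - 1 - Suc n) x u - Qfun T f r s2 (S' k) (T - 1 - Suc n) x u\<bar> \<le> Bc * (2 * QM + 2) ^ Suc n * D" .
    qed
  qed
  have n: "T - 1 - (T - 1 - t) = t" "T - 1 - t < T" using tT by auto
  have Qd: "\<bar>Qfun T f r s1 (S k) t x u - Qfun T f r s2 (S' k) t x u\<bar> \<le> Bc * (2 * QM + 2) ^ T * D" if "k < K" for k x u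
  proof -
    have "\<bar>Qfun T f r s1 (S k) t x u - Qfun T f r s2 (S' k) t x u\<bar> \<le> Bc * (2 * QM + 2) ^ (T - 1 - t) * D"
      using claim[OF n(2)] that unfolding n(1) by blast
    also have "\<dots> \<le> Bc * (2 * QM + 2) ^ T * D" using Bc0 D0 QM0
      by (intro mult_right_mono mult_left_mono power_increasing) auto
    finally show ?thesis .
  qed
  have "dtv (s1 t x) (s2 t x) \<le> c0 * (Bc * (2 * QM + 2) ^ T * D) / alpha"
    unfolding s1_def s2_def
    by (rule stab_t[OF alpha(2) SS SS' tT]) (simp_all add: Qd[unfolded s1_def s2_def])
  also have "\<dots> = Kc * d / alpha" unfolding Kc_def D_def by (simp add: algebra_simps)
  finally show ?thesis unfolding s1_def s2_def S_def S'_def .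
qed

end


lemma is_policy_mix:
  assumes "is_policy T p" "is_policy T q" "0 \<le> l" "l \<le> 1"
  shows "is_policy T (\<lambda>t x u. l * p t x u + (1 - l) * q t x u)"
  using assms unfolding is_policy_def by (auto intro: pdist_mix)

lemma normalize_mix:
  assumes p: "is_policy T p" and q: "is_policy T q" and l: "0 \<le> l" "l \<le> 1"
  shows "normalize_pol (\<lambda>t x u. l * p t x u + (1 - l) * q t x u) = (\<lambda>t x u. l * p t x u + (1 - l) * q t x u)"
proof (intro ext)
  fix t x u
  show "normalize_pol (\<lambda>t x u. l * p t x u + (1 - l) * q t x u) t x u = l * p t x u + (1 - l) * q t x u"
  proof (cases "t < T")
    case True
    have "pdist (\<lambda>u. l * p t x u + (1 - l) * q t x u)" using is_policy_mix[OF p q l] True by (auto simp: is_policy_def)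
    then show ?thesis by (simp add: normalize_pol_def pdist_def)
  next
    case False
    then have "p t = (\<lambda>_ _. 0)" "q t = (\<lambda>_ _. 0)" using p q by (auto simp: is_policy_def)
    then show ?thesis by (simp add: normalize_pol_def)
  qed
qed

lemma normalize_first:
  assumes p: "is_policy T p" and l: "l < 1"
  shows "normalize_pol (\<lambda>t x u. (1 - l) * p t x u) = p"
proof (intro ext)
  fix t x u
  show "normalize_pol (\<lambda>t x u. (1 - l) * p t x u) t x u = p t x u"
  proof (cases "t < T")
    case True
    then have "sum (p t x) UNIV = 1" using p by (auto simp: is_policy_def pdist_def)
    then show ?thesis using l by (simp add: normalize_pol_def sum_distrib_left[symmetric])
  next
    case False
    then have "p t = (\<lambda>_ _. 0)" using p by (auto simp: is_policy_def)
    then show ?thesis by (simp add: normalize_pol_def)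
  qed
qed

lemma rqfp_one: "is_policy T pi0 \<Longrightarrow> beta < 1 \<Longrightarrow> fst (rqfp Phi beta pi0 (Suc 0)) = pi0"
  using normalize_first[of T pi0 beta] by (simp add: Let_def)

lemma rqfp_SS:
  "fst (rqfp Phi beta pi0 (Suc (Suc j))) =
     normalize_pol (\<lambda>t x u. beta * fst (rqfp Phi beta pi0 (Suc j)) t x u + (1 - beta) * Phi (fst (rqfp Phi beta pi0 (Suc j))) t x u)"
  by (simp add: Let_def)

lemma dPi_le:
  fixes p q :: "nat \<Rightarrow> 'x::finite \<Rightarrow> 'u::finite \<Rightarrow> real"
  assumes "T \<ge> 1" "\<And>t x. t < T \<Longrightarrow> dtv (p t x) (q t x) \<le> c"
  shows "dPi T p q \<le> c"
proof -
  let ?A = "(\<lambda>(t, x). dtv (p t x) (q t x)) ` ({..<T} \<times> (UNIV::'x set))"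
  have z: "(0, undefined) \<in> {..<T} \<times> (UNIV::'x set)" using assms(1) by simp
  then have ne: "?A \<noteq> {}" by blast
  have fin: "finite ?A" by simp
  have "\<forall>a\<in>?A. a \<le> c" using assms(2) by auto
  then show ?thesis unfolding dPi_def using Max_le_iff[OF fin ne] by blast
qed


lemma dPi_nonneg:
  fixes p q :: "nat \<Rightarrow> 'x::finite \<Rightarrow> 'u::finite \<Rightarrow> real"
  assumes "T \<ge> 1"
  shows "0 \<le> dPi T p q"
proof -
  have "dtv (p 0 undefined) (q 0 undefined) \<le> dPi T p q"
    unfolding dPi_def using assms by (intro Max_ge) force+
  then show ?thesis using dtv_nonneg[of "p 0 undefined" "q 0 undefined"] by linarith
qed

context mfg
begin

definition "alpha0 = max (max c0 1) (2 * Kc)"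

lemma Phi_contr:
  fixes p1 p2 :: "nat \<Rightarrow> 'x \<Rightarrow> 'u \<Rightarrow> real"
  assumes alpha: "alpha \<ge> alpha0" and p1: "is_policy T p1" and p2: "is_policy T p2"
    and d0: "0 \<le> d" and dd: "\<And>t x. t < T \<Longrightarrow> dtv (p1 t x) (p2 t x) \<le> d" and tT: "t < T"
  shows "dtv (B_opt T f r K w tau alpha nu (B_prop f K mu0 p1) t x) (B_opt T f r K w tau alpha nu (B_prop f K mu0 p2) t x) \<le> d / 2"
proof -
  have a1: "alpha \<ge> c0" "alpha > 0" "2 * Kc \<le> alpha" using alpha unfolding alpha0_def by auto
  have "dtv (B_opt T f r K w tau alpha nu (B_prop f K mu0 p1) t x) (B_opt T f r K w tau alpha nu (B_prop f K mu0 p2) t x) \<le> Kc * d / alpha"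
    by (rule contraction[OF a1(1,2) p1 p2 d0 dd tT])
  also have "\<dots> \<le> d / 2"
  proof -
    have "Kc * d \<le> (alpha / 2) * d" using a1 d0 by (intro mult_right_mono) auto
    then show ?thesis using a1 by (simp add: divide_le_eq mult.commute)
  qed
  finally show ?thesis .
qed

lemma main_conv:
  fixes pi0 :: "nat \<Rightarrow> 'x \<Rightarrow> 'u \<Rightarrow> real"
  assumes alpha: "alpha \<ge> alpha0" and beta: "0 < beta" "beta < 1" and pi0: "is_policy T pi0"
  shows "\<exists>pistar. is_policy T pistar \<and>
           (\<lambda>j. dPi T (fst (rqfp (\<lambda>pol. B_opt T f r K w tau alpha nu (B_prop f K mu0 pol)) beta pi0 j)) pistar) \<longlonglongrightarrow> 0 \<and>
           B_opt T f r K w tau alpha nu (B_prop f K mu0 pistar) = pistar"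
proof -
  define Ph where "Ph = (\<lambda>pol. B_opt T f r K w tau alpha nu (B_prop f K mu0 pol))"
  have alpha_pos: "alpha > 0" using alpha unfolding alpha0_def by auto
  have Ph_pol: "is_policy T (Ph p)" for p unfolding Ph_def by (rule Bopt_policy[OF alpha_pos])
  define G where "G p = (\<lambda>t x u. beta * p t x u + (1 - beta) * Ph p t x u)" for p
  define a where "a j = fst (rqfp Ph beta pi0 (Suc j))" for j
  have G_pol: "is_policy T p \<Longrightarrow> is_policy T (G p)" for p
    unfolding G_def using beta by (intro is_policy_mix Ph_pol) auto
  have a_pol: "is_policy T (a j) \<and> a (Suc j) = G (a j)" for j
  proof (induction j)
    case 0
    have a0: "a 0 = pi0" unfolding a_def using rqfp_one[OF pi0 beta(2)] by simp
    have "a (Suc 0) = normalize_pol (\<lambda>t x u. beta * a 0 t x u + (1 - beta) * Ph (a 0) t x u)"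
      unfolding a_def by (rule rqfp_SS)
    also have "\<dots> = G (a 0)" unfolding G_def a0 by (rule normalize_mix[OF pi0 Ph_pol]) (use beta in auto)
    finally show ?case using a0 pi0 by simp
  next
    case (Suc j)
    then have p: "is_policy T (a (Suc j))" using G_pol by simp
    have "a (Suc (Suc j)) = normalize_pol (\<lambda>t x u. beta * a (Suc j) t x u + (1 - beta) * Ph (a (Suc j)) t x u)"
      unfolding a_def by (rule rqfp_SS)
    also have "\<dots> = G (a (Suc j))" unfolding G_def by (rule normalize_mix[OF p Ph_pol]) (use beta in auto)
    finally show ?case using p by simp
  qed
  have apol: "is_policy T (a j)" for j using a_pol by blast
  have aS: "a (Suc j) = G (a j)" for j using a_pol by blast
  define qq where "qq = (1 + beta) / 2"
  have qq: "0 \<le> qq" "qq < 1" unfolding qq_def using beta by auto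
  have Gc: "dtv (G p t x) (G q t x) \<le> qq * d"
    if p: "is_policy T p" and q: "is_policy T q" and d0: "0 \<le> d" and dd: "\<And>t x. t < T \<Longrightarrow> dtv (p t x) (q t x) \<le> d"
      and tT: "t < T" for p q d t x
  proof -
    have "dtv (G p t x) (G q t x) \<le> beta * dtv (p t x) (q t x) + (1 - beta) * dtv (Ph p t x) (Ph q t x)"
      unfolding G_def using beta by (intro dtv_mix) auto
    also have "\<dots> \<le> beta * d + (1 - beta) * (d / 2)"
    proof (intro add_mono mult_left_mono)
      show "dtv (Ph p t x) (Ph q t x) \<le> d / 2" unfolding Ph_def by (rule Phi_contr[OF alpha p q d0 dd tT])
    qed (use beta dd[OF tT] in auto)
    also have "\<dots> = qq * d" unfolding qq_def by (simp add: field_simps)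
    finally show ?thesis .
  qed
  have step: "dtv (a j t x) (a (Suc j) t x) \<le> qq ^ j" if "t < T" for j t x
    using that
  proof (induction j arbitrary: t x)
    case 0
    have "pdist (a 0 t x)" "pdist (a (Suc 0) t x)" using apol 0 by (auto simp: is_policy_def)
    then show ?case using dtv_le1 by simp
  next
    case (Suc j)
    have "dtv (G (a j) t x) (G (a (Suc j)) t x) \<le> qq * qq ^ j"
      by (rule Gc[OF apol apol _ Suc.IH Suc.prems]) (use qq in simp)
    then show ?case unfolding aS[symmetric] by simp
  qed
  define E where "E j = qq ^ j / (1 - qq)" for j
  have far: "dtv (a j t x) (a (j + n) t x) \<le> qq ^ j * (1 - qq ^ n) / (1 - qq)" if tT: "t < T" for j n t x
  proof (induction n)
    case 0 then show ?case by (simp add: dtv_def)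
  next
    case (Suc n)
    have "dtv (a j t x) (a (j + Suc n) t x) \<le> dtv (a j t x) (a (j + n) t x) + dtv (a (j + n) t x) (a (Suc (j + n)) t x)"
      using dtv_triangle by simp
    also have "\<dots> \<le> qq ^ j * (1 - qq ^ n) / (1 - qq) + qq ^ (j + n)"
      using Suc.IH step[OF tT, where j="j + n" and x=x] by (intro add_mono)
    also have "\<dots> = qq ^ j * (1 - qq ^ Suc n) / (1 - qq)"
      using qq by (simp add: field_simps power_add)
    finally show ?case .
  qed
  have far2: "dtv (a j t x) (a (j + n) t x) \<le> E j" if tT: "t < T" for j n t x
  proof -
    have "qq ^ j * (1 - qq ^ n) / (1 - qq) \<le> qq ^ j * 1 / (1 - qq)"
      using qq by (intro divide_right_mono mult_left_mono) auto
    then show ?thesis using far[OF tT, where j=j and n=n and x=x] unfolding E_def by simp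
  qed
  have pw: "\<bar>a (n + j) t x u - a j t x u\<bar> \<le> 2 * E j" if tT: "t < T" for j n t x u
    using abs_le_dtv[of "a (n + j) t x" u "a j t x"] far2[OF tT, where j=j and n=n and x=x] dtv_sym[of "a (j + n) t x" "a j t x"]
    by (simp add: add.commute)
  have E_lim: "(\<lambda>j. c * E j) \<longlonglongrightarrow> 0" for c
  proof -
    have "(\<lambda>j. qq ^ j) \<longlonglongrightarrow> 0" using qq by (intro LIMSEQ_power_zero) simp
    then have "(\<lambda>j. c * (qq ^ j / (1 - qq))) \<longlonglongrightarrow> c * (0 / (1 - qq))"
      by (intro tendsto_mult tendsto_const tendsto_divide) (use qq in auto)
    then show ?thesis unfolding E_def by simp
  qed
  have E_mono: "E n \<le> E M" if "M \<le> n" for M n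
    unfolding E_def using qq that by (intro divide_right_mono power_decreasing) auto
  have cauchy: "Cauchy (\<lambda>j. a j t x u)" if tT: "t < T" for t x u
  proof (rule metric_CauchyI)
    fix e :: real assume e: "0 < e"
    have "eventually (\<lambda>j. 4 * E j < e) sequentially"
      using order_tendstoD(2)[OF E_lim[of 4] e] .
    then obtain M where M: "\<And>j. j \<ge> M \<Longrightarrow> 4 * E j < e" by (auto simp: eventually_sequentially)
    show "\<exists>M. \<forall>m\<ge>M. \<forall>n\<ge>M. dist (a m t x u) (a n t x u) < e"
    proof (intro exI allI impI)
      fix m n assume m: "M \<le> m" and n: "M \<le> n"
      have "\<bar>a ((m - M) + M) t x u - a M t x u\<bar> \<le> 2 * E M" by (rule pw[OF tT])
      moreover have "\<bar>a ((n - M) + M) t x u - a M t x u\<bar> \<le> 2 * E M" by (rule pw[OF tT])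
      ultimately have "\<bar>a m t x u - a n t x u\<bar> \<le> 4 * E M" using m n by simp
      then show "dist (a m t x u) (a n t x u) < e" using M[of M] by (simp add: dist_real_def)
    qed
  qed
  define pistar where "pistar t x u = (if t < T then lim (\<lambda>j. a j t x u) else 0)" for t x u
  have conv: "(\<lambda>j. a j t x u) \<longlonglongrightarrow> pistar t x u" if tT: "t < T" for t x u
    using cauchy[OF tT, of x u] tT unfolding pistar_def by (simp add: Cauchy_convergent_iff convergent_LIMSEQ_iff)
  have close: "\<bar>pistar t x u - a j t x u\<bar> \<le> 2 * E j" if tT: "t < T" for t x u j
  proof -
    have "(\<lambda>n. \<bar>a (n + j) t x u - a j t x u\<bar>) \<longlonglongrightarrow> \<bar>pistar t x u - a j t x u\<bar>"
      by (intro tendsto_rabs tendsto_diff tendsto_const LIMSEQ_ignore_initial_segment conv tT)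
    then show ?thesis by (rule LIMSEQ_le_const2) (intro exI[of _ 0] allI impI pw[OF tT])
  qed
  define Eu where "Eu j = real CARD('u) * E j" for j
  have dclose: "dtv (a j t x) (pistar t x) \<le> Eu j" if tT: "t < T" for j t x
  proof -
    have "(\<Sum>u\<in>UNIV. \<bar>a j t x u - pistar t x u\<bar>) \<le> (\<Sum>u\<in>(UNIV::'u set). 2 * E j)"
      using close[OF tT] by (intro sum_mono) (simp add: abs_minus_commute)
    then show ?thesis unfolding dtv_def Eu_def by simp
  qed
  have ppol: "is_policy T pistar"
    unfolding is_policy_def
  proof (intro conjI allI impI)
    fix t x assume tT: "t < T"
    have nn: "0 \<le> pistar t x u" for u
    proof (rule LIMSEQ_le_const[OF conv[OF tT]], intro exI[of _ 0] allI impI)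
      fix n :: nat show "0 \<le> a n t x u" using apol[of n] tT by (auto simp: is_policy_def pdist_def)
    qed
    have "(\<lambda>j. \<Sum>u\<in>UNIV. a j t x u) \<longlonglongrightarrow> (\<Sum>u\<in>UNIV. pistar t x u)"
      by (intro tendsto_sum conv tT)
    moreover have "(\<lambda>j. \<Sum>u\<in>UNIV. a j t x u) = (\<lambda>j. 1)"
      using apol tT by (auto simp: is_policy_def pdist_def)
    ultimately have l1: "(\<lambda>j. 1::real) \<longlonglongrightarrow> (\<Sum>u\<in>UNIV. pistar t x u)" by simp
    have "(\<Sum>u\<in>UNIV. pistar t x u) = 1" using LIMSEQ_unique[OF l1 tendsto_const] by simp
    then show "pdist (pistar t x)" using nn by (simp add: pdist_def)
  next
    fix t assume "T \<le> t"
    then show "pistar t = (\<lambda>_ _. 0)" unfolding pistar_def by auto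
  qed
  have fixG: "G pistar t x = pistar t x" if tT: "t < T" for t x
  proof -
    have b: "dtv (G pistar t x) (pistar t x) \<le> qq * Eu j + Eu (Suc j)" for j
    proof -
      have Eu0: "0 \<le> Eu j" unfolding Eu_def E_def using qq by simp
      have "dtv (G pistar t x) (G (a j) t x) \<le> qq * Eu j"
        by (rule Gc[OF ppol apol Eu0 _ tT]) (use dclose dtv_sym in metis)
      moreover have "dtv (G (a j) t x) (pistar t x) \<le> Eu (Suc j)" unfolding aS[symmetric] by (rule dclose[OF tT])
      ultimately show ?thesis using dtv_triangle[where p="G pistar t x" and q="G (a j) t x" and r="pistar t x"] by linarith
    qed
    have "(\<lambda>j. qq * Eu j + Eu (Suc j)) \<longlonglongrightarrow> qq * 0 + 0"
      unfolding Eu_def by (intro tendsto_add tendsto_mult tendsto_const E_lim LIMSEQ_Suc)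
    then have lim: "(\<lambda>j. qq * Eu j + Eu (Suc j)) \<longlonglongrightarrow> 0" by simp
    have "dtv (G pistar t x) (pistar t x) \<le> 0"
      by (rule LIMSEQ_le_const[OF lim]) (intro exI[of _ 0] allI impI b)
    then show ?thesis by (rule dtv_zero)
  qed
  have fixPh: "Ph pistar = pistar"
  proof (intro ext)
    fix t x u
    show "Ph pistar t x u = pistar t x u"
    proof (cases "t < T")
      case True
      have "beta * pistar t x u + (1 - beta) * Ph pistar t x u = pistar t x u"
        using fun_cong[OF fixG[OF True, where x=x], of u] unfolding G_def by simp
      then have "(1 - beta) * (Ph pistar t x u - pistar t x u) = 0" by (simp add: algebra_simps)
      then show ?thesis using beta by simp
    next
      case False
      then show ?thesis using Ph_pol[of pistar] ppol by (auto simp: is_policy_def)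
    qed
  qed
  have dlim: "(\<lambda>j. dPi T (a j) pistar) \<longlonglongrightarrow> 0"
  proof (rule real_tendsto_sandwich[where f="\<lambda>_. 0" and h=Eu])
    show "\<forall>\<^sub>F j in sequentially. 0 \<le> dPi T (a j) pistar"
      by (intro always_eventually allI dPi_nonneg[OF T])
    show "\<forall>\<^sub>F j in sequentially. dPi T (a j) pistar \<le> Eu j"
      by (intro always_eventually allI dPi_le[OF T dclose])
    show "(\<lambda>_. 0) \<longlonglongrightarrow> (0::real)" by simp
    show "Eu \<longlonglongrightarrow> 0" unfolding Eu_def using E_lim by simp
  qed
  then have "(\<lambda>j. dPi T (fst (rqfp Ph beta pi0 j)) pistar) \<longlonglongrightarrow> 0"
    unfolding a_def by (rule LIMSEQ_imp_Suc)
  then show ?thesis using ppol fixPh unfolding Ph_def by blast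
qed

end


theorem theorem4:
  fixes T K :: nat
    and f :: "nat \<Rightarrow> 'x::finite \<Rightarrow> 'u::finite \<Rightarrow> ('x \<Rightarrow> real) \<Rightarrow> 'x \<Rightarrow> real"
    and r :: "nat \<Rightarrow> 'x \<Rightarrow> 'u \<Rightarrow> ('x \<Rightarrow> real) \<Rightarrow> real"
    and mu0 :: "nat \<Rightarrow> 'x \<Rightarrow> real"
    and w :: "nat \<Rightarrow> real"
    and nu :: "('u \<Rightarrow> real) \<Rightarrow> real"
    and Rmax Lf Lr tau m beta :: real
  assumes T: "T \<ge> 1"
    and f_dist: "\<And>t x u mu. t < T \<Longrightarrow> pdist mu \<Longrightarrow> pdist (f t x u mu)"
    and r_bound: "\<And>t x u mu. t < T \<Longrightarrow> pdist mu \<Longrightarrow> \<bar>r t x u mu\<bar> \<le> Rmax"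
    and Lf: "Lf > 0" and Lr: "Lr > 0"
    and f_lip: "\<And>t x u mu mu'. t < T \<Longrightarrow> pdist mu \<Longrightarrow> pdist mu' \<Longrightarrow>
                  (\<Sum>x'\<in>UNIV. \<bar>f t x u mu x' - f t x u mu' x'\<bar>) \<le> Lf * dtv mu mu'"
    and r_lip: "\<And>t x u mu mu'. t < T \<Longrightarrow> pdist mu \<Longrightarrow> pdist mu' \<Longrightarrow>
                  \<bar>r t x u mu - r t x u mu'\<bar> \<le> Lr * dtv mu mu'"
    and K: "K \<ge> 1"
    and mu0_dist: "\<And>k. k < K \<Longrightarrow> pdist (mu0 k)"
    and mu0_inj: "inj_on mu0 {..<K}"
    and w_nonneg: "\<And>k. k < K \<Longrightarrow> 0 \<le> w k"
    and w_sum: "(\<Sum>k<K. w k) = 1"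
    and tau: "tau > 0"
    and m: "m > 0"
    and nu_sc: "strongly_convex_simplex m nu"
    and nu_cont: "continuous_on {p. pdist p} nu"
    and beta: "0 < beta" "beta < 1"
  shows "\<exists>alpha0. \<forall>alpha \<ge> alpha0. \<forall>pi0. is_policy T pi0 \<longrightarrow>
           (\<exists>pistar. is_policy T pistar \<and>
              (\<lambda>j. dPi T (fst (rqfp (\<lambda>pol. B_opt T f r K w tau alpha nu (B_prop f K mu0 pol)) beta pi0 j))
                          pistar) \<longlonglongrightarrow> 0 \<and>
              is_MF_RQE T f r K mu0 w tau alpha nu pistar (B_prop f K mu0 pistar))"
  proof -
  interpret mfg T K f r mu0 w nu Rmax Lf Lr tau m
    using T f_dist r_bound Lf Lr f_lip r_lip mu0_dist w_nonneg w_sum tau m nu_sc nu_cont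
    by unfold_locales auto
  show ?thesis
  proof (rule exI[of _ alpha0], intro allI impI)
    fix alpha :: real and pi0 :: "nat \<Rightarrow> 'x \<Rightarrow> 'u \<Rightarrow> real"
    assume alpha: "alpha0 \<le> alpha" and pi0: "is_policy T pi0"
    obtain pistar where ps: "is_policy T pistar"
      and lim: "(\<lambda>j. dPi T (fst (rqfp (\<lambda>pol. B_opt T f r K w tau alpha nu (B_prop f K mu0 pol)) beta pi0 j)) pistar) \<longlonglongrightarrow> 0"
      and fixp: "B_opt T f r K w tau alpha nu (B_prop f K mu0 pistar) = pistar"
      using main_conv[OF alpha beta pi0] by blast
    have "is_MF_RQE T f r K mu0 w tau alpha nu pistar (B_prop f K mu0 pistar)"
      unfolding is_MF_RQE_def using fixp by simp
    then show "\<exists>pistar. is_policy T pistar \<and>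
              (\<lambda>j. dPi T (fst (rqfp (\<lambda>pol. B_opt T f r K w tau alpha nu (B_prop f K mu0 pol)) beta pi0 j))
                          pistar) \<longlonglongrightarrow> 0 \<and>
              is_MF_RQE T f r K mu0 w tau alpha nu pistar (B_prop f K mu0 pistar)"
      using ps lim by blast
  qed
qed

end
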